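(* For every $d\ge 2$, $\mathcal{NN}_{\mathrm{LReLU}}(d,d,d)$ compactly approximates $\mathrm{INN}_{\mathrm{ACF}_d}$: for every $f\in\mathrm{INN}_{\mathrm{ACF}_d}$, every compact $K\subset\mathbb{R}^d$ and every $\epsilon>0$ there exists $g\in\mathcal{NN}_{\mathrm{LReLU}}(d,d,d)$ with $\sup_{x\in K}\|f(x)-g(x)\|_\infty<\epsilon$.
   Context: For $\beta\in\mathbb{R}$, $\mathrm{LReLU}_\beta(x)=x$ if $x\ge 0$ and $\beta x$ if $x<0$, applied componentwise to vectors. $\mathcal{NN}_{\mathrm{LReLU}}(d,d,d)$ is the set of all maps $W_{N+1}\circ\mathrm{LReLU}_{\beta_N}\circ W_N\circ\cdots\circ\mathrm{LReLU}_{\beta_1}\circ W_1:\mathbb{R}^d\to\mathbb{R}^d$ with $N\in\mathbb{N}_0$, $\beta_i\in\mathbb{R}$, integers $1\le d_1,\dots,d_N\le d$, $d_0=d_{N+1}=d$, and $W_i:\mathbb{R}^{d_{i-1}}\to\mathbb{R}^{d_i}$ affine. $\mathrm{ACF}_d$ (single-coordinate affine coupling flows) is the set of maps $\mathbb{R}^d\to\mathbb{R}^d$ of the form $x\mapsto(x_1,\dots,x_{d-1},\exp(s(x_{1:d-1}))\,x_d+t(x_{1:d-1}))$ with $s,t:\mathbb{R}^{d-1}\to\mathbb{R}$ continuous, where $x_{1:d-1}=(x_1,\dots,x_{d-1})$. For a set $\mathcal{G}$ of invertible maps $\mathbb{R}^d\to\mathbb{R}^d$, $\mathrm{INN}_{\mathcal{G}}$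 is the set of all compositions $W_1\circ g_1\circ W_2\circ g_2\circ\cdots\circ W_n\circ g_n\circ W_{n+1}$ with $n\in\mathbb{N}$, $g_i\in\mathcal{G}$ and $W_i$ invertible affine maps of $\mathbb{R}^d$. *)

theory Defs
  imports "HOL-Analysis.Analysis"
begin

text \<open>A vector of R^m is represented as a function nat => real whose
coordinates 0..m-1 are the entries and all other coordinates are 0. The ambient
space nat => real carries the product topology, which restricted to Rvec m is the
Euclidean topology of R^m.\<close>

definition Rvec :: "nat \<Rightarrow> (nat \<Rightarrow> real) set" where
  "Rvec m = {x. \<forall>i\<ge>m. x i = 0}"

definition aff :: "(nat \<Rightarrow> nat \<Rightarrow> real) \<Rightarrow> (nat \<Rightarrow> real) \<Rightarrow> nat \<Rightarrow> nat
    \<Rightarrow> (nat \<Rightarrow> real) \<Rightarrow> (nat \<Rightarrow> real)" where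
  "aff A b m n x = (\<lambda>i. if i < n then (\<Sum>j<m. A i j * x j) + b i else 0)"

definition lrelu :: "real \<Rightarrow> (nat \<Rightarrow> real) \<Rightarrow> (nat \<Rightarrow> real)" where
  "lrelu \<beta> x = (\<lambda>i. if x i \<ge> 0 then x i else \<beta> * x i)"

inductive nn_pre :: "nat \<Rightarrow> nat \<Rightarrow> ((nat \<Rightarrow> real) \<Rightarrow> (nat \<Rightarrow> real)) \<Rightarrow> bool"
  for d :: nat where
  first: "nn_pre d m (aff A b d m)"
| step: "\<lbrakk>nn_pre d k h; 1 \<le> k; k \<le> d\<rbrakk> \<Longrightarrow> nn_pre d m (aff A b k m \<circ> lrelu \<beta> \<circ> h)"

definition NN_LReLU :: "nat \<Rightarrow> ((nat \<Rightarrow> real) \<Rightarrow> (nat \<Rightarrow> real)) set" where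
  "NN_LReLU d = {g. nn_pre d d g}"

definition acf_map :: "nat \<Rightarrow> ((nat \<Rightarrow> real) \<Rightarrow> real) \<Rightarrow> ((nat \<Rightarrow> real) \<Rightarrow> real)
    \<Rightarrow> (nat \<Rightarrow> real) \<Rightarrow> (nat \<Rightarrow> real)" where
  "acf_map d s t x =
     (let x' = (\<lambda>i. if i < d - 1 then x i else 0)
      in x(d - 1 := exp (s x') * x (d - 1) + t x'))"

definition ACF :: "nat \<Rightarrow> ((nat \<Rightarrow> real) \<Rightarrow> (nat \<Rightarrow> real)) set" where
  "ACF d = {acf_map d s t | s t.
      continuous_on (Rvec (d - 1)) s \<and> continuous_on (Rvec (d - 1)) t}"

definition inv_aff :: "nat \<Rightarrow> ((nat \<Rightarrow> real) \<Rightarrow> (nat \<Rightarrow> real)) set" where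
  "inv_aff d = {aff A b d d | A b. bij_betw (aff A b d d) (Rvec d) (Rvec d)}"

inductive inn :: "((nat \<Rightarrow> real) \<Rightarrow> (nat \<Rightarrow> real)) set \<Rightarrow> nat
    \<Rightarrow> ((nat \<Rightarrow> real) \<Rightarrow> (nat \<Rightarrow> real)) \<Rightarrow> bool"
  for G :: "((nat \<Rightarrow> real) \<Rightarrow> (nat \<Rightarrow> real)) set" and d :: nat where
  base: "\<lbrakk>W1 \<in> inv_aff d; g \<in> G; W2 \<in> inv_aff d\<rbrakk> \<Longrightarrow> inn G d (W1 \<circ> g \<circ> W2)"
| step: "\<lbrakk>W \<in> inv_aff d; g \<in> G; inn G d f\<rbrakk> \<Longrightarrow> inn G d (W \<circ> g \<circ> f)"

definition INN :: "((nat \<Rightarrow> real) \<Rightarrow> (nat \<Rightarrow> real)) set \<Rightarrow> nat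
    \<Rightarrow> ((nat \<Rightarrow> real) \<Rightarrow> (nat \<Rightarrow> real)) set" where
  "INN G d = {f. inn G d f}"

definition linf :: "nat \<Rightarrow> (nat \<Rightarrow> real) \<Rightarrow> real" where
  "linf d v = Max ((\<lambda>i. \<bar>v i\<bar>) ` {..<d})"

end

theory Submission
  imports Defs
begin


lemma nn_out: "nn_pre d m g \<Longrightarrow> m \<le> i \<Longrightarrow> g x i = 0"
  by (induction rule: nn_pre.induct) (auto simp: aff_def)

lemma aff_comp:
  "aff A b m n (aff A' b' k m x) =
   aff (\<lambda>i j. \<Sum>l<m. A i l * A' l j) (\<lambda>i. (\<Sum>l<m. A i l * b' l) + b i) k n x"
proof -
  have "(\<Sum>l<m. A i l * ((\<Sum>j<k. A' l j * x j) + b' l)) =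
        (\<Sum>j<k. (\<Sum>l<m. A i l * A' l j) * x j) + (\<Sum>l<m. A i l * b' l)" for i
    by (simp add: distrib_left sum.distrib sum_distrib_left sum_distrib_right sum.swap[of _ "{..<k}"] mult.assoc)
  moreover have "(\<Sum>l<m. if l < m then A i l * ((\<Sum>j<k. A' l j * x j) + b' l) else 0)
     = (\<Sum>l<m. A i l * ((\<Sum>j<k. A' l j * x j) + b' l))" for i
    by (rule sum.cong) auto
  ultimately show ?thesis
    unfolding aff_def by (auto simp: if_distrib)
qed

lemma aff_comp_fun: "aff A b m n \<circ> aff A' b' k m =
   aff (\<lambda>i j. \<Sum>l<m. A i l * A' l j) (\<lambda>i. (\<Sum>l<m. A i l * b' l) + b i) k n"
  by (rule ext) (simp add: aff_comp)

lemma nn_comp_aff: assumes "nn_pre d k g" shows "nn_pre d m (aff A b k m \<circ> g)"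
  using assms
proof (cases rule: nn_pre.cases)
  case (first A' b')
  then show ?thesis by (simp add: aff_comp_fun nn_pre.first)
next
  case (step k' h A' b' \<beta>)
  then have "aff A b k m \<circ> g = (aff A b k m \<circ> aff A' b' k' k) \<circ> lrelu \<beta> \<circ> h"
    by (simp add: comp_assoc)
  then show ?thesis using step by (simp add: aff_comp_fun nn_pre.step)
qed

lemma nn_comp: "nn_pre d m g2 \<Longrightarrow> nn_pre d d g1 \<Longrightarrow> nn_pre d m (g2 \<circ> g1)"
proof (induction rule: nn_pre.induct)
  case (first m A b)
  then show ?case by (rule nn_comp_aff)
next
  case (step k h m A b \<beta>)
  then have "nn_pre d m (aff A b k m \<circ> lrelu \<beta> \<circ> (h \<circ> g1))" by (intro nn_pre.step) (auto simp: comp_def)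
  then show ?case by (simp add: comp_def)
qed

lemma NN_comp: "g2 \<in> NN_LReLU d \<Longrightarrow> g1 \<in> NN_LReLU d \<Longrightarrow> g2 \<circ> g1 \<in> NN_LReLU d"
  by (simp add: NN_LReLU_def nn_comp)

lemma NN_out: "g \<in> NN_LReLU d \<Longrightarrow> g x \<in> Rvec d"
  by (auto simp: NN_LReLU_def Rvec_def nn_out)


definition relu :: "real \<Rightarrow> real" where "relu u = max u 0"

definition bx :: "nat \<Rightarrow> real \<Rightarrow> (nat \<Rightarrow> real) set" where
  "bx d R = {x \<in> Rvec d. \<forall>i<d. \<bar>x i\<bar> \<le> R}"
definition boxp :: "nat \<Rightarrow> real \<Rightarrow> (nat \<Rightarrow> real) set" where
  "boxp d R = {x \<in> Rvec d. \<forall>i<d-1. \<bar>x i\<bar> \<le> R}"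
definition upd :: "nat \<Rightarrow> ((nat \<Rightarrow> real) \<Rightarrow> real) \<Rightarrow> (nat \<Rightarrow> real) \<Rightarrow> (nat \<Rightarrow> real)" where
  "upd d F x = x(d-1 := F x)"
definition exR :: "nat \<Rightarrow> ((nat \<Rightarrow> real) \<Rightarrow> real) \<Rightarrow> bool" where
  "exR d F \<longleftrightarrow> (\<forall>R. \<exists>g\<in>NN_LReLU d. \<forall>x\<in>boxp d R. g x = upd d F x)"
definition appr :: "nat \<Rightarrow> ((nat \<Rightarrow> real) \<Rightarrow> (nat \<Rightarrow> real)) \<Rightarrow> bool" where
  "appr d T \<longleftrightarrow> (\<forall>R \<epsilon>. \<epsilon> > 0 \<longrightarrow> (\<exists>g\<in>NN_LReLU d. \<forall>x\<in>bx d R. \<forall>i<d. \<bar>T x i - g x i\<bar> \<le> \<epsilon>))"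
definition bddT :: "nat \<Rightarrow> ((nat \<Rightarrow> real) \<Rightarrow> (nat \<Rightarrow> real)) \<Rightarrow> bool" where
  "bddT d T \<longleftrightarrow> (\<forall>R. \<exists>R1. \<forall>x\<in>bx d R. T x \<in> bx d R1)"
definition ucT :: "nat \<Rightarrow> ((nat \<Rightarrow> real) \<Rightarrow> (nat \<Rightarrow> real)) \<Rightarrow> bool" where
  "ucT d T \<longleftrightarrow> (\<forall>R \<epsilon>. \<epsilon> > 0 \<longrightarrow> (\<exists>\<delta>>0. \<forall>x\<in>bx d R. \<forall>y\<in>bx d R.
      (\<forall>i<d. \<bar>x i - y i\<bar> \<le> \<delta>) \<longrightarrow> (\<forall>i<d. \<bar>T x i - T y i\<bar> \<le> \<epsilon>)))"
definition good :: "nat \<Rightarrow> ((nat \<Rightarrow> real) \<Rightarrow> (nat \<Rightarrow> real)) \<Rightarrow> bool" where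
  "good d T \<longleftrightarrow> appr d T \<and> bddT d T \<and> ucT d T"
definition bddF :: "nat \<Rightarrow> ((nat \<Rightarrow> real) \<Rightarrow> real) \<Rightarrow> bool" where
  "bddF d F \<longleftrightarrow> (\<forall>R. \<exists>B. \<forall>x\<in>bx d R. \<bar>F x\<bar> \<le> B)"
definition ucF :: "nat \<Rightarrow> ((nat \<Rightarrow> real) \<Rightarrow> real) \<Rightarrow> bool" where
  "ucF d F \<longleftrightarrow> (\<forall>R \<epsilon>. \<epsilon> > 0 \<longrightarrow> (\<exists>\<delta>>0. \<forall>x\<in>bx d R. \<forall>y\<in>bx d R.
      (\<forall>i<d. \<bar>x i - y i\<bar> \<le> \<delta>) \<longrightarrow> \<bar>F x - F y\<bar> \<le> \<epsilon>))"

lemma apprE: assumes "appr d T" "\<epsilon> > 0"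
  obtains g where "g \<in> NN_LReLU d" "\<And>x i. x\<in>bx d R \<Longrightarrow> i < d \<Longrightarrow> \<bar>T x i - g x i\<bar> \<le> \<epsilon>"
proof -
  have "\<exists>g\<in>NN_LReLU d. \<forall>x\<in>bx d R. \<forall>i<d. \<bar>T x i - g x i\<bar> \<le> \<epsilon>"
    using assms unfolding appr_def by simp
  then obtain g where "g \<in> NN_LReLU d" and H: "\<forall>x\<in>bx d R. \<forall>i<d. \<bar>T x i - g x i\<bar> \<le> \<epsilon>" by blast
  show thesis by (rule that[OF \<open>g \<in> NN_LReLU d\<close>]) (use H in simp)
qed

lemma ucTE: assumes "ucT d T" "\<epsilon> > 0"
  obtains \<delta> where "\<delta> > 0" "\<And>x y. x\<in>bx d R \<Longrightarrow> y\<in>bx d R \<Longrightarrow>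
      (\<forall>i<d. \<bar>x i - y i\<bar> \<le> \<delta>) \<Longrightarrow> (\<forall>i<d. \<bar>T x i - T y i\<bar> \<le> \<epsilon>)"
proof -
  have "\<exists>\<delta>>0. \<forall>x\<in>bx d R. \<forall>y\<in>bx d R. (\<forall>i<d. \<bar>x i - y i\<bar> \<le> \<delta>) \<longrightarrow> (\<forall>i<d. \<bar>T x i - T y i\<bar> \<le> \<epsilon>)"
    using assms unfolding ucT_def by simp
  then obtain \<delta> where "\<delta> > 0" and H: "\<forall>x\<in>bx d R. \<forall>y\<in>bx d R. (\<forall>i<d. \<bar>x i - y i\<bar> \<le> \<delta>) \<longrightarrow> (\<forall>i<d. \<bar>T x i - T y i\<bar> \<le> \<epsilon>)"
    by blast
  show thesis by (rule that[OF \<open>\<delta> > 0\<close>]) (use H in simp)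
qed

lemma bddTE: assumes "bddT d T"
  obtains R1 where "\<And>x. x \<in> bx d R \<Longrightarrow> T x \<in> bx d R1"
proof -
  have "\<exists>R1. \<forall>x\<in>bx d R. T x \<in> bx d R1" using assms unfolding bddT_def by simp
  then obtain R1 where H: "\<forall>x\<in>bx d R. T x \<in> bx d R1" by blast
  show thesis by (rule that[of R1]) (use H in simp)
qed

lemma ucFE: assumes "ucF d F" "\<epsilon> > 0"
  obtains \<delta> where "\<delta> > 0" "\<And>x y. x\<in>bx d R \<Longrightarrow> y\<in>bx d R \<Longrightarrow>
      (\<forall>i<d. \<bar>x i - y i\<bar> \<le> \<delta>) \<Longrightarrow> \<bar>F x - F y\<bar> \<le> \<epsilon>"
proof -
  have "\<exists>\<delta>>0. \<forall>x\<in>bx d R. \<forall>y\<in>bx d R. (\<forall>i<d. \<bar>x i - y i\<bar> \<le> \<delta>) \<longrightarrow> \<bar>F x - F y\<bar> \<le> \<epsilon>"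
    using assms unfolding ucF_def by simp
  then obtain \<delta> where "\<delta> > 0" and H: "\<forall>x\<in>bx d R. \<forall>y\<in>bx d R. (\<forall>i<d. \<bar>x i - y i\<bar> \<le> \<delta>) \<longrightarrow> \<bar>F x - F y\<bar> \<le> \<epsilon>"
    by blast
  show thesis by (rule that[OF \<open>\<delta> > 0\<close>]) (use H in simp)
qed

lemma bddFE: assumes "bddF d F"
  obtains B where "\<And>x. x \<in> bx d R \<Longrightarrow> \<bar>F x\<bar> \<le> B"
proof -
  have "\<exists>B. \<forall>x\<in>bx d R. \<bar>F x\<bar> \<le> B" using assms unfolding bddF_def by simp
  then obtain B where H: "\<forall>x\<in>bx d R. \<bar>F x\<bar> \<le> B" by blast
  show thesis by (rule that[of B]) (use H in simp)
qed

lemma abs_tri: "\<bar>(a::real) - b\<bar> \<le> e1 \<Longrightarrow> \<bar>b - c\<bar> \<le> e2 \<Longrightarrow> \<bar>a - c\<bar> \<le> e1 + e2"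
  by (simp add: abs_le_iff)

lemma box_mono: "R \<le> R' \<Longrightarrow> x \<in> bx d R \<Longrightarrow> x \<in> bx d R'"
  by (auto simp: bx_def)

lemma good_comp:
  assumes "good d T1" "good d T2" shows "good d (T2 \<circ> T1)"
proof -
  have a1: "appr d T1" and b1: "bddT d T1" and u1: "ucT d T1"
    and a2: "appr d T2" and b2: "bddT d T2" and u2: "ucT d T2"
    using assms by (auto simp: good_def)
  have "appr d (T2 \<circ> T1)" unfolding appr_def
  proof (intro allI impI)
    fix R \<epsilon> :: real assume e: "\<epsilon> > 0"
    have e2: "\<epsilon>/2 > 0" using e by simp
    obtain R1 where R1: "\<And>x. x \<in> bx d R \<Longrightarrow> T1 x \<in> bx d R1" using bddTE[OF b1, where R="R"] by blast
    obtain \<delta> where d0: "\<delta> > 0" and dd: "\<And>x y. x\<in>bx d (R1+1) \<Longrightarrow> y\<in>bx d (R1+1) \<Longrightarrow>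
      (\<forall>i<d. \<bar>x i - y i\<bar> \<le> \<delta>) \<Longrightarrow> (\<forall>i<d. \<bar>T2 x i - T2 y i\<bar> \<le> \<epsilon>/2)"
      using ucTE[OF u2 e2, where R="R1+1"] by blast
    obtain g2 where g2: "g2 \<in> NN_LReLU d" "\<And>x i. x\<in>bx d (R1+1) \<Longrightarrow> i < d \<Longrightarrow> \<bar>T2 x i - g2 x i\<bar> \<le> \<epsilon>/2"
      using apprE[OF a2 e2, where R="R1+1"] by blast
    have m0: "min \<delta> 1 > 0" using d0 by simp
    obtain g1 where g1: "g1 \<in> NN_LReLU d" "\<And>x i. x\<in>bx d R \<Longrightarrow> i < d \<Longrightarrow> \<bar>T1 x i - g1 x i\<bar> \<le> min \<delta> 1"
      using apprE[OF a1 m0, where R="R"] by blast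
    show "\<exists>g\<in>NN_LReLU d. \<forall>x\<in>bx d R. \<forall>i<d. \<bar>(T2 \<circ> T1) x i - g x i\<bar> \<le> \<epsilon>"
    proof (intro bexI ballI allI impI)
      fix x i assume x: "x \<in> bx d R" and i: "i < d"
      have t1: "T1 x \<in> bx d (R1+1)" using R1[OF x] by (rule box_mono[rotated]) simp
      have "g1 x \<in> bx d (R1+1)"
      proof -
        have "\<bar>g1 x j\<bar> \<le> R1 + 1" if "j < d" for j
          using g1(2)[OF x that] R1[OF x] that by (auto simp: bx_def)
        then show ?thesis using NN_out[OF g1(1)] by (auto simp: bx_def)
      qed
      moreover have "\<forall>j<d. \<bar>T1 x j - g1 x j\<bar> \<le> \<delta>" using g1(2)[OF x] by force
      ultimately have "\<bar>T2 (T1 x) i - T2 (g1 x) i\<bar> \<le> \<epsilon>/2" using dd[OF t1] i by blast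
      moreover have "\<bar>T2 (g1 x) i - g2 (g1 x) i\<bar> \<le> \<epsilon>/2" using g2(2) \<open>g1 x \<in> bx d (R1+1)\<close> i by blast
      ultimately have "\<bar>T2 (T1 x) i - g2 (g1 x) i\<bar> \<le> \<epsilon>/2 + \<epsilon>/2" by (rule abs_tri)
      then show "\<bar>(T2 \<circ> T1) x i - (g2 \<circ> g1) x i\<bar> \<le> \<epsilon>" by simp
    qed (rule NN_comp[OF g2(1) g1(1)])
  qed
  moreover have "bddT d (T2 \<circ> T1)" unfolding bddT_def
  proof
    fix R
    obtain R1 where R1: "\<And>x. x \<in> bx d R \<Longrightarrow> T1 x \<in> bx d R1" using bddTE[OF b1, where R="R"] by blast
    obtain R2 where R2: "\<And>x. x \<in> bx d R1 \<Longrightarrow> T2 x \<in> bx d R2" using bddTE[OF b2, where R="R1"] by blast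
    show "\<exists>R1. \<forall>x\<in>bx d R. (T2 \<circ> T1) x \<in> bx d R1" using R1 R2 by auto
  qed
  moreover have "ucT d (T2 \<circ> T1)" unfolding ucT_def
  proof (intro allI impI)
    fix R \<epsilon> :: real assume e: "\<epsilon> > 0"
    obtain R1 where R1: "\<And>x. x \<in> bx d R \<Longrightarrow> T1 x \<in> bx d R1" using bddTE[OF b1, where R="R"] by blast
    obtain \<delta>2 where d2: "\<delta>2 > 0" "\<And>x y. x\<in>bx d R1 \<Longrightarrow> y\<in>bx d R1 \<Longrightarrow>
      (\<forall>i<d. \<bar>x i - y i\<bar> \<le> \<delta>2) \<Longrightarrow> (\<forall>i<d. \<bar>T2 x i - T2 y i\<bar> \<le> \<epsilon>)"
      using ucTE[OF u2 e, where R="R1"] by blast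
    obtain \<delta>1 where d1: "\<delta>1 > 0" "\<And>x y. x\<in>bx d R \<Longrightarrow> y\<in>bx d R \<Longrightarrow>
      (\<forall>i<d. \<bar>x i - y i\<bar> \<le> \<delta>1) \<Longrightarrow> (\<forall>i<d. \<bar>T1 x i - T1 y i\<bar> \<le> \<delta>2)"
      using ucTE[OF u1 d2(1), where R="R"] by blast
    show "\<exists>\<delta>>0. \<forall>x\<in>bx d R. \<forall>y\<in>bx d R. (\<forall>i<d. \<bar>x i - y i\<bar> \<le> \<delta>) \<longrightarrow>
          (\<forall>i<d. \<bar>(T2 \<circ> T1) x i - (T2 \<circ> T1) y i\<bar> \<le> \<epsilon>)"
    proof (intro exI[of _ \<delta>1] conjI ballI impI)
      fix x y assume x: "x \<in> bx d R" and y: "y \<in> bx d R" and xy: "\<forall>i<d. \<bar>x i - y i\<bar> \<le> \<delta>1"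
      show "\<forall>i<d. \<bar>(T2 \<circ> T1) x i - (T2 \<circ> T1) y i\<bar> \<le> \<epsilon>"
        using d2(2)[OF R1[OF x] R1[OF y] d1(2)[OF x y xy]] by simp
    qed (rule d1(1))
  qed
  ultimately show ?thesis by (simp add: good_def)
qed

lemma upd_Rvec: "1 \<le> d \<Longrightarrow> x \<in> Rvec d \<Longrightarrow> upd d F x \<in> Rvec d"
  by (auto simp: upd_def Rvec_def)

lemma exR_comp:
  assumes d: "1 \<le> d" and "exR d F1" "exR d F2"
  shows "exR d (\<lambda>x. F2 (upd d F1 x))"
  unfolding exR_def
proof
  fix R
  obtain g1 where g1: "g1 \<in> NN_LReLU d" "\<And>x. x\<in>boxp d R \<Longrightarrow> g1 x = upd d F1 x"
    using assms(2) unfolding exR_def by blast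
  obtain g2 where g2: "g2 \<in> NN_LReLU d" "\<And>x. x\<in>boxp d R \<Longrightarrow> g2 x = upd d F2 x"
    using assms(3) unfolding exR_def by blast
  have "x \<in> boxp d R \<Longrightarrow> upd d F1 x \<in> boxp d R" for x
    using d by (auto simp: boxp_def upd_def Rvec_def)
  then show "\<exists>g\<in>NN_LReLU d. \<forall>x\<in>boxp d R. g x = upd d (\<lambda>x. F2 (upd d F1 x)) x"
    using g1 g2 NN_comp[OF g2(1) g1(1)] by (intro bexI[of _ "g2 \<circ> g1"]) (auto simp: upd_def)
qed

lemma box_boxp: "x \<in> bx d R \<Longrightarrow> x \<in> boxp d R"
  by (auto simp: bx_def boxp_def)

lemma exR_appr: assumes "exR d F" shows "appr d (upd d F)"
  unfolding appr_def
proof (intro allI impI)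
  fix R \<epsilon> :: real assume "\<epsilon> > 0"
  obtain g where g: "g \<in> NN_LReLU d" "\<And>x. x\<in>boxp d R \<Longrightarrow> g x = upd d F x"
    using assms unfolding exR_def by blast
  show "\<exists>g\<in>NN_LReLU d. \<forall>x\<in>bx d R. \<forall>i<d. \<bar>upd d F x i - g x i\<bar> \<le> \<epsilon>"
  proof (intro bexI ballI allI impI)
    fix x i assume "x \<in> bx d R"
    then have "g x = upd d F x" using g box_boxp by blast
    then show "\<bar>upd d F x i - g x i\<bar> \<le> \<epsilon>" using \<open>\<epsilon> > 0\<close> by simp
  qed (rule g)
qed

lemma sum_diag: assumes "i < (n::nat)" shows "(\<Sum>j<n. (if i = j then a else 0) * x j) = a * (x i :: real)"
proof -
  have "(\<Sum>j<n. (if i = j then a else 0) * x j) = (\<Sum>j<n. if j = i then a * x j else 0)"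
    by (rule sum.cong) auto
  also have "\<dots> = a * x i" by (subst sum.delta) (use assms in auto)
  finally show ?thesis .
qed

lemma aff_diag: "aff (\<lambda>i j. if i = j then a i else 0) b n n x = (\<lambda>i. if i < n then a i * x i + b i else 0)"
  unfolding aff_def by (auto intro!: ext simp: sum_diag)



lemma Rvec_eqI: assumes "x \<in> Rvec d" "y \<in> Rvec d" "\<And>i. i < d \<Longrightarrow> x i = y i" shows "x = y"
proof
  fix i show "x i = y i"
  proof (cases "i < d")
    case False then show ?thesis using assms(1,2) by (simp add: Rvec_def)
  qed (rule assms(3))
qed

lemma exR_E1a: assumes d: "1 \<le> d" shows "exR d (\<lambda>x. \<alpha> * x (d-1) + c0)"
  unfolding exR_def
proof
  fix R
  let ?g = "aff (\<lambda>i j. if i = j then (if i = d-1 then \<alpha> else 1) else 0) (\<lambda>i. if i = d-1 then c0 else 0) d d"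
  have "?g \<in> NN_LReLU d" by (simp add: NN_LReLU_def nn_pre.first)
  moreover have "?g x = upd d (\<lambda>x. \<alpha> * x (d-1) + c0) x" if "x \<in> boxp d R" for x
  proof (rule Rvec_eqI)
    show "?g x \<in> Rvec d" using \<open>?g \<in> NN_LReLU d\<close> by (rule NN_out)
    show "upd d (\<lambda>x. \<alpha> * x (d-1) + c0) x \<in> Rvec d" using that d by (intro upd_Rvec) (auto simp: boxp_def)
  qed (auto simp: aff_diag upd_def)
  ultimately show "\<exists>g\<in>NN_LReLU d. \<forall>x\<in>boxp d R. g x = upd d (\<lambda>x. \<alpha> * x (d-1) + c0) x" by blast
qed

lemma exR_E1b: assumes d: "1 \<le> d" and j: "j < d - 1" shows "exR d (\<lambda>x. x (d-1) + w * x j)"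
  unfolding exR_def
proof
  fix R
  let ?A = "\<lambda>i l. (if i = l then 1 else 0) + (if i = d-1 \<and> l = j then w else 0)"
  let ?g = "aff ?A (\<lambda>i. 0) d d"
  have "?g \<in> NN_LReLU d" by (simp add: NN_LReLU_def nn_pre.first)
  moreover have "?g x = upd d (\<lambda>x. x (d-1) + w * x j) x" if "x \<in> boxp d R" for x
  proof (rule Rvec_eqI)
    show "?g x \<in> Rvec d" using \<open>?g \<in> NN_LReLU d\<close> by (rule NN_out)
    show "upd d (\<lambda>x. x (d-1) + w * x j) x \<in> Rvec d" using that d by (intro upd_Rvec) (auto simp: boxp_def)
  next
    fix i assume i: "i < d"
    have "(\<Sum>l<d. ?A i l * x l) = (\<Sum>l<d. (if i = l then 1 else 0) * x l) + (\<Sum>l<d. (if i = d-1 \<and> l = j then w else 0) * x l)"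
      by (simp add: distrib_right sum.distrib)
    also have "(\<Sum>l<d. (if i = d-1 \<and> l = j then w else 0) * x l) = (if i = d-1 then w * x j else 0)"
    proof (cases "i = d-1")
      case True
      have "(\<Sum>l<d. (if i = d-1 \<and> l = j then w else 0) * x l) = (\<Sum>l<d. (if j = l then w else 0) * x l)"
        using True by (intro sum.cong) auto
      then show ?thesis using True j sum_diag[of j d w x] by simp
    qed simp
    finally show "?g x i = upd d (\<lambda>x. x (d-1) + w * x j) x i"
      using i sum_diag[of i d 1 x] by (simp add: aff_def upd_def)
  qed
  ultimately show "\<exists>g\<in>NN_LReLU d. \<forall>x\<in>boxp d R. g x = upd d (\<lambda>x. x (d-1) + w * x j) x" by blast
qed

lemma exR_E2: assumes d: "1 \<le> d" and c: "c > -1" shows "exR d (\<lambda>x. x (d-1) + c * relu (x (d-1)))"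
  unfolding exR_def
proof
  fix R0 :: real
  define R where "R = max R0 0"
  define \<beta> where "\<beta> = 1 / (1 + c)"
  have c1: "1 + c > 0" using c by simp
  have "(1 + c) * (1 + c) > 0" using c1 by simp
  then have c2: "1 + (c * c + c * 2) \<noteq> 0" by (simp add: algebra_simps)
  let ?h = "aff (\<lambda>i j. if i = j then 1 else 0) (\<lambda>i. if i < d-1 then R else 0) d d"
  let ?a = "aff (\<lambda>i j. if i = j then (if i = d-1 then 1 + c else 1) else 0) (\<lambda>i. if i < d-1 then -R else 0) d d"
  let ?g = "?a \<circ> lrelu \<beta> \<circ> ?h"
  have "nn_pre d d ?h" by (rule nn_pre.first)
  then have "nn_pre d d ?g" using d by (intro nn_pre.step) auto
  then have gN: "?g \<in> NN_LReLU d" by (simp add: NN_LReLU_def)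
  moreover have "?g x = upd d (\<lambda>x. x (d-1) + c * relu (x (d-1))) x" if x: "x \<in> boxp d R0" for x
  proof (rule Rvec_eqI)
    show "?g x \<in> Rvec d" using gN by (rule NN_out)
    show "upd d (\<lambda>x. x (d-1) + c * relu (x (d-1))) x \<in> Rvec d" using that d by (intro upd_Rvec) (auto simp: boxp_def)
  next
    fix i assume i: "i < d"
    have hx: "?h x = (\<lambda>i. if i < d then 1 * x i + (if i < d-1 then R else 0) else 0)"
      by (rule aff_diag)
    show "?g x i = upd d (\<lambda>x. x (d-1) + c * relu (x (d-1))) x i"
    proof (cases "i = d-1")
      case True
      then have "\<not> i < d - 1" by simp
      then show ?thesis using True i c1 c2
        by (auto simp: aff_diag hx lrelu_def upd_def relu_def \<beta>_def field_simps)
    next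
      case False
      then have "i < d - 1" using i by simp
      then have "x i + R \<ge> 0" using x by (auto simp: boxp_def R_def abs_le_iff)
      then show ?thesis using False i \<open>i < d-1\<close>
        by (auto simp: aff_diag hx lrelu_def upd_def)
    qed
  qed
  ultimately show "\<exists>g\<in>NN_LReLU d. \<forall>x\<in>boxp d R0. g x = upd d (\<lambda>x. x (d-1) + c * relu (x (d-1))) x" by blast
qed



lemma bddT_upd: assumes d: "1 \<le> d" and F: "bddF d F" shows "bddT d (upd d F)"
  unfolding bddT_def
proof
  fix R
  obtain B where B: "\<And>x. x \<in> bx d R \<Longrightarrow> \<bar>F x\<bar> \<le> B" using bddFE[OF F, where R=R] by blast
  have "upd d F x \<in> bx d (\<bar>R\<bar> + \<bar>B\<bar>)" if x: "x \<in> bx d R" for x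
  proof -
    have "\<bar>upd d F x i\<bar> \<le> \<bar>R\<bar> + \<bar>B\<bar>" if i: "i < d" for i
    proof (cases "i = d - 1")
      case True then show ?thesis using B[OF x] by (simp add: upd_def)
    next
      case False
      have "\<bar>x i\<bar> \<le> R" using x i by (simp add: bx_def)
      then show ?thesis using False abs_ge_self[of R] abs_ge_zero[of B] by (simp add: upd_def)
    qed
    moreover have "upd d F x \<in> Rvec d" using x d by (intro upd_Rvec) (auto simp: bx_def)
    ultimately show ?thesis by (simp add: bx_def)
  qed
  then show "\<exists>R1. \<forall>x\<in>bx d R. upd d F x \<in> bx d R1" by blast
qed

lemma ucT_upd: assumes d: "1 \<le> d" and F: "ucF d F" shows "ucT d (upd d F)"
  unfolding ucT_def
proof (intro allI impI)
  fix R \<epsilon> :: real assume e: "\<epsilon> > 0"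
  obtain \<delta> where d0: "\<delta> > 0" and dd: "\<And>x y. x\<in>bx d R \<Longrightarrow> y\<in>bx d R \<Longrightarrow>
      (\<forall>i<d. \<bar>x i - y i\<bar> \<le> \<delta>) \<Longrightarrow> \<bar>F x - F y\<bar> \<le> \<epsilon>"
    using ucFE[OF F e, where R=R] by blast
  show "\<exists>\<delta>>0. \<forall>x\<in>bx d R. \<forall>y\<in>bx d R. (\<forall>i<d. \<bar>x i - y i\<bar> \<le> \<delta>) \<longrightarrow> (\<forall>i<d. \<bar>upd d F x i - upd d F y i\<bar> \<le> \<epsilon>)"
  proof (intro exI[of _ "min \<delta> \<epsilon>"] conjI ballI impI allI)
    fix x y i assume x: "x \<in> bx d R" and y: "y \<in> bx d R" and xy: "\<forall>i<d. \<bar>x i - y i\<bar> \<le> min \<delta> \<epsilon>" and i: "i < d"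
    show "\<bar>upd d F x i - upd d F y i\<bar> \<le> \<epsilon>"
    proof (cases "i = d - 1")
      case True then show ?thesis using dd[OF x y] xy by (simp add: upd_def)
    next
      case False then show ?thesis using xy i by (simp add: upd_def)
    qed
  qed (use d0 e in auto)
qed

lemma good_upd: "1 \<le> d \<Longrightarrow> bddF d F \<Longrightarrow> ucF d F \<Longrightarrow> appr d (upd d F) \<Longrightarrow> good d (upd d F)"
  unfolding good_def using bddT_upd ucT_upd by blast

lemma bddF_coord: "bddF d (\<lambda>x. x j)"
  unfolding bddF_def
proof
  fix R
  have "\<bar>x j\<bar> \<le> \<bar>R\<bar>" if "x \<in> bx d R" for x
    using that by (cases "j < d") (auto simp: bx_def Rvec_def)
  then show "\<exists>B. \<forall>x\<in>bx d R. \<bar>x j\<bar> \<le> B" by blast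
qed

lemma ucF_coord: "ucF d (\<lambda>x. x j)"
  unfolding ucF_def
proof (intro allI impI)
  fix R \<epsilon> :: real assume "\<epsilon> > 0"
  have "\<bar>x j - y j\<bar> \<le> \<epsilon>" if "x \<in> bx d R" "y \<in> bx d R" "\<forall>i<d. \<bar>x i - y i\<bar> \<le> \<epsilon>" for x y
    using that \<open>\<epsilon> > 0\<close> by (cases "j < d") (auto simp: bx_def Rvec_def)
  then show "\<exists>\<delta>>0. \<forall>x\<in>bx d R. \<forall>y\<in>bx d R. (\<forall>i<d. \<bar>x i - y i\<bar> \<le> \<delta>) \<longrightarrow> \<bar>x j - y j\<bar> \<le> \<epsilon>"
    using \<open>\<epsilon> > 0\<close> by blast
qed

lemma bddF_const: "bddF d (\<lambda>x. c)"
  unfolding bddF_def by blast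

lemma ucF_const: "ucF d (\<lambda>x. c)"
  unfolding ucF_def by (auto intro: exI[of _ 1])

lemma bddF_add: assumes "bddF d F" "bddF d G" shows "bddF d (\<lambda>x. F x + G x)"
  unfolding bddF_def
proof
  fix R
  obtain B1 where 1: "\<And>x. x \<in> bx d R \<Longrightarrow> \<bar>F x\<bar> \<le> B1" using bddFE[OF assms(1), where R=R] by blast
  obtain B2 where 2: "\<And>x. x \<in> bx d R \<Longrightarrow> \<bar>G x\<bar> \<le> B2" using bddFE[OF assms(2), where R=R] by blast
  have "\<bar>F x + G x\<bar> \<le> B1 + B2" if "x \<in> bx d R" for x
    using 1[OF that] 2[OF that] abs_triangle_ineq[of "F x" "G x"] by linarith
  then show "\<exists>B. \<forall>x\<in>bx d R. \<bar>F x + G x\<bar> \<le> B" by blast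
qed

lemma bddF_mult: assumes "bddF d F" "bddF d G" shows "bddF d (\<lambda>x. F x * G x)"
  unfolding bddF_def
proof
  fix R
  obtain B1 where 1: "\<And>x. x \<in> bx d R \<Longrightarrow> \<bar>F x\<bar> \<le> B1" using bddFE[OF assms(1), where R=R] by blast
  obtain B2 where 2: "\<And>x. x \<in> bx d R \<Longrightarrow> \<bar>G x\<bar> \<le> B2" using bddFE[OF assms(2), where R=R] by blast
  have "\<bar>F x * G x\<bar> \<le> B1 * B2" if "x \<in> bx d R" for x
    unfolding abs_mult using 1[OF that] 2[OF that] by (intro mult_mono) auto
  then show "\<exists>B. \<forall>x\<in>bx d R. \<bar>F x * G x\<bar> \<le> B" by blast
qed

lemma ucF_add: assumes "ucF d F" "ucF d G" shows "ucF d (\<lambda>x. F x + G x)"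
  unfolding ucF_def
proof (intro allI impI)
  fix R \<epsilon> :: real assume e: "\<epsilon> > 0"
  obtain \<delta>1 where 1: "\<delta>1 > 0" "\<And>x y. x\<in>bx d R \<Longrightarrow> y\<in>bx d R \<Longrightarrow>
      (\<forall>i<d. \<bar>x i - y i\<bar> \<le> \<delta>1) \<Longrightarrow> \<bar>F x - F y\<bar> \<le> \<epsilon>/2"
    using ucFE[OF assms(1) half_gt_zero[OF e], where R=R] by blast
  obtain \<delta>2 where 2: "\<delta>2 > 0" "\<And>x y. x\<in>bx d R \<Longrightarrow> y\<in>bx d R \<Longrightarrow>
      (\<forall>i<d. \<bar>x i - y i\<bar> \<le> \<delta>2) \<Longrightarrow> \<bar>G x - G y\<bar> \<le> \<epsilon>/2"
    using ucFE[OF assms(2) half_gt_zero[OF e], where R=R] by blast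
  show "\<exists>\<delta>>0. \<forall>x\<in>bx d R. \<forall>y\<in>bx d R. (\<forall>i<d. \<bar>x i - y i\<bar> \<le> \<delta>) \<longrightarrow> \<bar>F x + G x - (F y + G y)\<bar> \<le> \<epsilon>"
  proof (intro exI[of _ "min \<delta>1 \<delta>2"] conjI ballI impI)
    fix x y assume x: "x \<in> bx d R" and y: "y \<in> bx d R" and xy: "\<forall>i<d. \<bar>x i - y i\<bar> \<le> min \<delta>1 \<delta>2"
    have "\<bar>F x - F y\<bar> \<le> \<epsilon>/2" using 1(2)[OF x y] xy by auto
    moreover have "\<bar>G x - G y\<bar> \<le> \<epsilon>/2" using 2(2)[OF x y] xy by auto
    moreover have "\<bar>F x + G x - (F y + G y)\<bar> \<le> \<bar>F x - F y\<bar> + \<bar>G x - G y\<bar>"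
      using abs_triangle_ineq[of "F x - F y" "G x - G y"] by (simp add: algebra_simps)
    ultimately show "\<bar>F x + G x - (F y + G y)\<bar> \<le> \<epsilon>" by linarith
  qed (use 1 2 in auto)
qed

lemma ucF_mult: assumes "ucF d F" "ucF d G" "bddF d F" "bddF d G" shows "ucF d (\<lambda>x. F x * G x)"
  unfolding ucF_def
proof (intro allI impI)
  fix R \<epsilon> :: real assume e: "\<epsilon> > 0"
  obtain BF where BF: "\<And>x. x \<in> bx d R \<Longrightarrow> \<bar>F x\<bar> \<le> BF" using bddFE[OF assms(3), where R=R] by blast
  obtain BG where BG: "\<And>x. x \<in> bx d R \<Longrightarrow> \<bar>G x\<bar> \<le> BG" using bddFE[OF assms(4), where R=R] by blast
  define M where "M = max BF 0 + max BG 0 + 1"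
  have M: "M > 0" by (simp add: M_def add_nonneg_pos)
  obtain \<delta>1 where 1: "\<delta>1 > 0" "\<And>x y. x\<in>bx d R \<Longrightarrow> y\<in>bx d R \<Longrightarrow>
      (\<forall>i<d. \<bar>x i - y i\<bar> \<le> \<delta>1) \<Longrightarrow> \<bar>F x - F y\<bar> \<le> \<epsilon>/M"
    using ucFE[OF assms(1) divide_pos_pos[OF e M], where R=R] by blast
  obtain \<delta>2 where 2: "\<delta>2 > 0" "\<And>x y. x\<in>bx d R \<Longrightarrow> y\<in>bx d R \<Longrightarrow>
      (\<forall>i<d. \<bar>x i - y i\<bar> \<le> \<delta>2) \<Longrightarrow> \<bar>G x - G y\<bar> \<le> \<epsilon>/M"
    using ucFE[OF assms(2) divide_pos_pos[OF e M], where R=R] by blast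
  show "\<exists>\<delta>>0. \<forall>x\<in>bx d R. \<forall>y\<in>bx d R. (\<forall>i<d. \<bar>x i - y i\<bar> \<le> \<delta>) \<longrightarrow> \<bar>F x * G x - F y * G y\<bar> \<le> \<epsilon>"
  proof (intro exI[of _ "min \<delta>1 \<delta>2"] conjI ballI impI)
    fix x y assume x: "x \<in> bx d R" and y: "y \<in> bx d R" and xy: "\<forall>i<d. \<bar>x i - y i\<bar> \<le> min \<delta>1 \<delta>2"
    have f: "\<bar>F x - F y\<bar> \<le> \<epsilon>/M" using 1(2)[OF x y] xy by auto
    have g: "\<bar>G x - G y\<bar> \<le> \<epsilon>/M" using 2(2)[OF x y] xy by auto
    have "F x * G x - F y * G y = F x * (G x - G y) + G y * (F x - F y)" by (simp add: algebra_simps)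
    then have "\<bar>F x * G x - F y * G y\<bar> \<le> \<bar>F x\<bar> * \<bar>G x - G y\<bar> + \<bar>G y\<bar> * \<bar>F x - F y\<bar>"
      by (metis abs_mult abs_triangle_ineq)
    also have "\<dots> \<le> max BF 0 * (\<epsilon>/M) + max BG 0 * (\<epsilon>/M)"
      using BF[OF x] BG[OF y] f g by (intro add_mono mult_mono) auto
    also have "\<dots> = (max BF 0 + max BG 0) / M * \<epsilon>" using M by (simp add: field_simps)
    also have "\<dots> \<le> 1 * \<epsilon>" using M e by (intro mult_right_mono) (auto simp: M_def)
    finally show "\<bar>F x * G x - F y * G y\<bar> \<le> \<epsilon>" by simp
  qed (use 1 2 in auto)
qed

lemma bddF_comp: assumes "bddF d F" and phi: "continuous_on UNIV \<phi>" shows "bddF d (\<lambda>x. \<phi> (F x))"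
  unfolding bddF_def
proof
  fix R
  obtain B where B: "\<And>x. x \<in> bx d R \<Longrightarrow> \<bar>F x\<bar> \<le> B" using bddFE[OF assms(1), where R=R] by blast
  have "compact (\<phi> ` {-B..B})" by (rule compact_continuous_image) (auto intro: continuous_on_subset[OF phi])
  then have "bounded (\<phi> ` {-B..B})" by (rule compact_imp_bounded)
  then obtain C where C: "\<And>u. u \<in> \<phi> ` {-B..B} \<Longrightarrow> norm u \<le> C" unfolding bounded_iff by blast
  have "\<bar>\<phi> (F x)\<bar> \<le> C" if "x \<in> bx d R" for x using C[of "\<phi> (F x)"] B[OF that] by (auto simp: abs_le_iff)
  then show "\<exists>B. \<forall>x\<in>bx d R. \<bar>\<phi> (F x)\<bar> \<le> B" by blast
qed

lemma ucF_comp: assumes "bddF d F" "ucF d F" and phi: "continuous_on UNIV \<phi>" shows "ucF d (\<lambda>x. \<phi> (F x))"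
  unfolding ucF_def
proof (intro allI impI)
  fix R \<epsilon> :: real assume e: "\<epsilon> > 0"
  obtain B where B: "\<And>x. x \<in> bx d R \<Longrightarrow> \<bar>F x\<bar> \<le> B" using bddFE[OF assms(1), where R=R] by blast
  have "uniformly_continuous_on {-B..B} \<phi>"
    by (rule compact_uniformly_continuous) (auto intro: continuous_on_subset[OF phi])
  then have "\<exists>e1>0. \<forall>u\<in>{-B..B}. \<forall>v\<in>{-B..B}. dist v u < e1 \<longrightarrow> dist (\<phi> v) (\<phi> u) < \<epsilon>"
    unfolding uniformly_continuous_on_def using e by simp
  then obtain e1 where e1: "e1 > 0" and H: "\<forall>u\<in>{-B..B}. \<forall>v\<in>{-B..B}. dist v u < e1 \<longrightarrow> dist (\<phi> v) (\<phi> u) < \<epsilon>"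
    by blast
  obtain \<delta> where d0: "\<delta> > 0" and dd: "\<And>x y. x\<in>bx d R \<Longrightarrow> y\<in>bx d R \<Longrightarrow>
      (\<forall>i<d. \<bar>x i - y i\<bar> \<le> \<delta>) \<Longrightarrow> \<bar>F x - F y\<bar> \<le> e1/2"
    using ucFE[OF assms(2) half_gt_zero[OF e1(1)], where R=R] by blast
  show "\<exists>\<delta>>0. \<forall>x\<in>bx d R. \<forall>y\<in>bx d R. (\<forall>i<d. \<bar>x i - y i\<bar> \<le> \<delta>) \<longrightarrow> \<bar>\<phi> (F x) - \<phi> (F y)\<bar> \<le> \<epsilon>"
  proof (intro exI[of _ \<delta>] conjI ballI impI)
    fix x y assume x: "x \<in> bx d R" and y: "y \<in> bx d R" and xy: "\<forall>i<d. \<bar>x i - y i\<bar> \<le> \<delta>"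
    have "dist (F x) (F y) < e1" using dd[OF x y xy] e1(1) by (simp add: dist_real_def)
    then have "dist (\<phi> (F x)) (\<phi> (F y)) < \<epsilon>" using H B[OF x] B[OF y] by (auto simp: abs_le_iff)
    then show "\<bar>\<phi> (F x) - \<phi> (F y)\<bar> \<le> \<epsilon>" by (simp add: dist_real_def)
  qed (rule d0)
qed



definition addG :: "nat \<Rightarrow> ((nat \<Rightarrow> real) \<Rightarrow> real) \<Rightarrow> (nat \<Rightarrow> real) \<Rightarrow> (nat \<Rightarrow> real)" where
  "addG d G = upd d (\<lambda>x. x (d-1) + G x)"
definition indep :: "nat \<Rightarrow> ((nat \<Rightarrow> real) \<Rightarrow> real) \<Rightarrow> bool" where
  "indep d G \<longleftrightarrow> (\<forall>x v. G (x(d-1 := v)) = G x)"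
definition inA :: "nat \<Rightarrow> ((nat \<Rightarrow> real) \<Rightarrow> real) \<Rightarrow> bool" where
  "inA d G \<longleftrightarrow> indep d G \<and> ucF d G \<and> bddF d G \<and> appr d (addG d G)"

lemma relu_cont: "continuous_on UNIV relu"
  unfolding relu_def by (intro continuous_intros)

lemma relu_lip: "\<bar>relu a - relu b\<bar> \<le> \<bar>a - b\<bar>"
  unfolding relu_def max_def by (smt (verit))

lemma relu_scale: "c > 0 \<Longrightarrow> relu (c * a) = c * relu a"
  by (auto simp: relu_def max_def mult_le_0_iff)

lemma A_good: assumes "1 \<le> d" "inA d G" shows "good d (addG d G)"
  using assms unfolding inA_def addG_def
  by (intro good_upd bddF_add[OF bddF_coord] ucF_add[OF ucF_coord]) auto

lemma A_cong: assumes "inA d F" "\<And>x. F x = G x" shows "inA d G"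
proof -
  have "F = G" by (rule ext) (rule assms(2))
  with assms(1) show ?thesis by simp
qed

lemma appr_lim:
  assumes "\<And>R \<epsilon>. \<epsilon> > 0 \<Longrightarrow> \<exists>T'. appr d T' \<and> (\<forall>x\<in>bx d R. \<forall>i<d. \<bar>T x i - T' x i\<bar> \<le> \<epsilon>)"
  shows "appr d T"
  unfolding appr_def
proof (intro allI impI)
  fix R \<epsilon> :: real assume e: "\<epsilon> > 0"
  have "\<exists>T'. appr d T' \<and> (\<forall>x\<in>bx d R. \<forall>i<d. \<bar>T x i - T' x i\<bar> \<le> \<epsilon>/2)"
    using assms[where R=R and \<epsilon>="\<epsilon>/2"] e by simp
  then obtain T' where T'1: "appr d T'" and H: "\<forall>x\<in>bx d R. \<forall>i<d. \<bar>T x i - T' x i\<bar> \<le> \<epsilon>/2"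
    by blast
  have T': "appr d T'" "\<And>x i. x\<in>bx d R \<Longrightarrow> i < d \<Longrightarrow> \<bar>T x i - T' x i\<bar> \<le> \<epsilon>/2"
    using T'1 H by auto
  obtain g where g: "g \<in> NN_LReLU d" "\<And>x i. x\<in>bx d R \<Longrightarrow> i < d \<Longrightarrow> \<bar>T' x i - g x i\<bar> \<le> \<epsilon>/2"
    using apprE[OF T'(1) half_gt_zero[OF e], where R=R] by blast
  show "\<exists>g\<in>NN_LReLU d. \<forall>x\<in>bx d R. \<forall>i<d. \<bar>T x i - g x i\<bar> \<le> \<epsilon>"
    using abs_tri[OF T'(2) g(2)] g(1) by (intro bexI[of _ g]) auto
qed

lemma addG_comp: "indep d G2 \<Longrightarrow> addG d G2 \<circ> addG d G1 = addG d (\<lambda>x. G1 x + G2 x)"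
  by (rule ext) (simp add: addG_def upd_def indep_def add.assoc)

lemma indep_add: "indep d F \<Longrightarrow> indep d G \<Longrightarrow> indep d (\<lambda>x. F x + G x)"
  by (simp add: indep_def)
lemma indep_mult: "indep d F \<Longrightarrow> indep d G \<Longrightarrow> indep d (\<lambda>x. F x * G x)"
  by (simp add: indep_def)
lemma indep_comp: "indep d F \<Longrightarrow> indep d (\<lambda>x. \<phi> (F x))"
  by (simp add: indep_def)
lemma indep_const: "indep d (\<lambda>x. c)"
  by (simp add: indep_def)
lemma indep_coord: "j \<noteq> d - 1 \<Longrightarrow> indep d (\<lambda>x. x j)"
  by (simp add: indep_def)

lemma A_add: assumes d: "1 \<le> d" and "inA d G1" "inA d G2" shows "inA d (\<lambda>x. G1 x + G2 x)"
proof -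
  have "good d (addG d G2 \<circ> addG d G1)" using assms by (intro good_comp A_good)
  then have "appr d (addG d (\<lambda>x. G1 x + G2 x))" using assms(3) addG_comp[of d G2 G1]
    by (simp add: good_def inA_def)
  then show ?thesis using assms unfolding inA_def by (simp add: indep_add ucF_add bddF_add)
qed

lemma A_const: assumes d: "1 \<le> d" shows "inA d (\<lambda>x. c)"
proof -
  have "appr d (upd d (\<lambda>x. 1 * x (d-1) + c))" by (rule exR_appr[OF exR_E1a[OF d]])
  then have "appr d (addG d (\<lambda>x. c))" by (simp add: addG_def)
  then show ?thesis by (simp add: inA_def indep_const ucF_const bddF_const)
qed

lemma A_coord: assumes d: "1 \<le> d" and j: "j < d - 1" shows "inA d (\<lambda>x. x j)"
proof -
  have "appr d (upd d (\<lambda>x. x (d-1) + 1 * x j))" by (rule exR_appr[OF exR_E1b[OF d j]])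
  then have "appr d (addG d (\<lambda>x. x j))" by (simp add: addG_def)
  then show ?thesis using j by (simp add: inA_def indep_coord ucF_coord bddF_coord)
qed

lemma good_scale: assumes d: "1 \<le> d" shows "good d (upd d (\<lambda>x. \<alpha> * x (d-1)))"
proof -
  have "upd d (\<lambda>x. \<alpha> * x (d-1)) = upd d (\<lambda>x. \<alpha> * x (d-1) + 0)" by simp
  then have "appr d (upd d (\<lambda>x. \<alpha> * x (d-1)))" using exR_appr[OF exR_E1a[OF d], of \<alpha> 0] by simp
  then show ?thesis using d
    by (intro good_upd bddF_mult[OF bddF_const bddF_coord] ucF_mult[OF ucF_const ucF_coord bddF_const bddF_coord])
qed

lemma A_scale: assumes d: "1 \<le> d" and A: "inA d G" and c: "c \<noteq> 0" shows "inA d (\<lambda>x. c * G x)"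
proof -
  have ind: "indep d G" using A by (simp add: inA_def)
  have eq: "upd d (\<lambda>x. c * x (d-1)) \<circ> addG d G \<circ> upd d (\<lambda>x. (1/c) * x (d-1)) = addG d (\<lambda>x. c * G x)"
  proof (rule ext)
    fix x
    have Gx: "G (x(d - Suc 0 := v)) = G x" for v using ind by (simp add: indep_def)
    have k: "c * (x (d - Suc 0) / c + G x) = x (d - Suc 0) + c * G x" using c by (simp add: field_simps)
    show "(upd d (\<lambda>x. c * x (d-1)) \<circ> addG d G \<circ> upd d (\<lambda>x. (1/c) * x (d-1))) x = addG d (\<lambda>x. c * G x) x"
      by (simp add: addG_def upd_def Gx k)
  qed
  have "good d (upd d (\<lambda>x. c * x (d-1)) \<circ> addG d G \<circ> upd d (\<lambda>x. (1/c) * x (d-1)))"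
    using d A by (intro good_comp good_scale A_good)
  then have "appr d (addG d (\<lambda>x. c * G x))" using eq by (simp add: good_def)
  then show ?thesis using A unfolding inA_def
    using indep_mult[OF indep_const ind] ucF_mult[OF ucF_const _ bddF_const] bddF_mult[OF bddF_const] by simp
qed

lemma A_relu: assumes d: "1 \<le> d" and A: "inA d G" shows "inA d (\<lambda>x. relu (G x))"
proof -
  have ind: "indep d G" and uG: "ucF d G" and bG: "bddF d G" using A by (auto simp: inA_def)
  have "appr d (addG d (\<lambda>x. relu (G x)))"
  proof (rule appr_lim)
    fix R \<epsilon> :: real assume e: "\<epsilon> > 0"
    define N where "N = \<bar>R\<bar> / \<epsilon> + 1"
    have N: "N > 0" using e by (simp add: N_def add_nonneg_pos)
    have NR: "\<bar>R\<bar> / N \<le> \<epsilon>" using e N unfolding N_def by (simp add: field_simps)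
    let ?E = "upd d (\<lambda>x. x (d-1) + (1/N) * relu (x (d-1)))"
    have gE: "good d ?E"
    proof (intro good_upd d)
      show "appr d ?E" using N by (intro exR_appr exR_E2 d) (smt (verit) divide_pos_pos)
      have b1: "bddF d (\<lambda>x. relu (x (d-1)))" by (rule bddF_comp[OF bddF_coord relu_cont])
      have u1: "ucF d (\<lambda>x. relu (x (d-1)))" by (rule ucF_comp[OF bddF_coord ucF_coord relu_cont])
      have b2: "bddF d (\<lambda>x. (1/N) * relu (x (d-1)))" by (rule bddF_mult[OF bddF_const b1])
      have u2: "ucF d (\<lambda>x. (1/N) * relu (x (d-1)))" by (rule ucF_mult[OF ucF_const u1 bddF_const b1])
      show "bddF d (\<lambda>x. x (d-1) + (1/N) * relu (x (d-1)))" by (rule bddF_add[OF bddF_coord b2])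
      show "ucF d (\<lambda>x. x (d-1) + (1/N) * relu (x (d-1)))" by (rule ucF_add[OF ucF_coord u2])
    qed
    have A1: "inA d (\<lambda>x. N * G x)" using A N d by (intro A_scale) auto
    have A2: "inA d (\<lambda>x. (- N) * G x)" using A N d by (intro A_scale) auto
    let ?T = "addG d (\<lambda>x. (- N) * G x) \<circ> ?E \<circ> addG d (\<lambda>x. N * G x)"
    have "good d ?T" using A1 A2 gE d by (intro good_comp A_good)
    moreover have "\<forall>x\<in>bx d R. \<forall>i<d. \<bar>addG d (\<lambda>x. relu (G x)) x i - ?T x i\<bar> \<le> \<epsilon>"
    proof (intro ballI allI impI)
      fix x i assume x: "x \<in> bx d R" and i: "i < d"
      have Gx: "G (x(d - Suc 0 := v)) = G x" for v using ind by (simp add: indep_def)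
      have "?T x = x(d-1 := x (d-1) + (1/N) * relu (x (d-1) + N * G x))"
        by (simp add: addG_def upd_def Gx)
      also have "(1/N) * relu (x (d-1) + N * G x) = relu (x (d-1) / N + G x)"
      proof -
        have "x (d-1) + N * G x = N * (x (d-1) / N + G x)" using N by (simp add: field_simps)
        then show ?thesis using N relu_scale[of N] by simp
      qed
      finally have T: "?T x = x(d-1 := x (d-1) + relu (x (d-1) / N + G x))" .
      have "\<bar>x (d-1)\<bar> \<le> R" using x d by (auto simp: bx_def)
      then have y: "\<bar>x (d-1)\<bar> \<le> \<bar>R\<bar>" by linarith
      have "\<bar>relu (G x) - relu (x (d-1) / N + G x)\<bar> \<le> \<bar>x (d-1) / N\<bar>"
        using relu_lip[of "G x" "x (d-1) / N + G x"] by simp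
      also have "\<dots> \<le> \<bar>R\<bar> / N" using y N by (simp add: abs_div divide_right_mono)
      finally have "\<bar>relu (G x) - relu (x (d-1) / N + G x)\<bar> \<le> \<epsilon>" using NR by linarith
      then show "\<bar>addG d (\<lambda>x. relu (G x)) x i - ?T x i\<bar> \<le> \<epsilon>"
        using e unfolding T by (simp add: addG_def upd_def)
    qed
    ultimately show "\<exists>T'. appr d T' \<and> (\<forall>x\<in>bx d R. \<forall>i<d. \<bar>addG d (\<lambda>x. relu (G x)) x i - T' x i\<bar> \<le> \<epsilon>)"
      by (auto simp: good_def)
  qed
  then show ?thesis using ind uG bG unfolding inA_def
    using indep_comp[OF ind] ucF_comp[OF bG uG relu_cont] bddF_comp[OF bG relu_cont] by simp
qed

lemma A_max: assumes d: "1 \<le> d" and "inA d F" "inA d G" shows "inA d (\<lambda>x. max (F x) (G x))"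
proof -
  have "inA d (\<lambda>x. F x + relu (G x + (-1) * F x))"
    using assms by (intro A_add A_relu A_scale) auto
  then show ?thesis by (rule A_cong) (simp add: relu_def max_def)
qed

lemma A_abs: assumes d: "1 \<le> d" and "inA d F" shows "inA d (\<lambda>x. \<bar>F x\<bar>)"
proof -
  have "inA d (\<lambda>x. max (F x) ((-1) * F x))"
    using assms by (intro A_max A_scale) auto
  then show ?thesis by (rule A_cong) (simp add: abs_if max_def)
qed

lemma A_Max: assumes d: "1 \<le> d" and "finite P" "P \<noteq> {}" and "\<And>p. p \<in> P \<Longrightarrow> inA d (\<phi> p)"
  shows "inA d (\<lambda>x. Max ((\<lambda>p. \<phi> p x) ` P))"
  using assms(2,3,4)
proof (induction P rule: finite_ne_induct)
  case (singleton p)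
  then show ?case by simp
next
  case (insert p P)
  have "inA d (\<lambda>x. max (\<phi> p x) (Max ((\<lambda>p. \<phi> p x) ` P)))"
    using insert d by (intro A_max) auto
  then show ?case by (rule A_cong) (use insert in simp)
qed



lemma nrm_le: assumes "finite I" "I \<noteq> {}" shows "Max (f ` I) \<le> (t::real) \<longleftrightarrow> (\<forall>i\<in>I. f i \<le> t)"
  using assms by (simp add: Max_le_iff)

lemma A_dense:
  assumes d: "2 \<le> d" and ind: "indep d G" and uG: "ucF d G" and bG: "bddF d G"
  shows "inA d G"
proof -
  have d1: "1 \<le> d" using d by simp
  define m where "m = d - 1"
  have m: "m \<ge> 1" "m < d" "m = d - 1" using d by (auto simp: m_def)
  have "appr d (addG d G)"
  proof (rule appr_lim)
    fix R0 \<epsilon> :: real assume e: "\<epsilon> > 0"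
    define R where "R = \<bar>R0\<bar> + 1"
    have R: "R > 0" "R0 \<le> R" by (auto simp: R_def)
    obtain \<delta> where d0: "\<delta> > 0" and dd: "\<And>x y. x\<in>bx d R \<Longrightarrow> y\<in>bx d R \<Longrightarrow>
        (\<forall>i<d. \<bar>x i - y i\<bar> \<le> \<delta>) \<Longrightarrow> \<bar>G x - G y\<bar> \<le> \<epsilon>"
      using ucFE[OF uG e, where R=R] by blast
    obtain B0 where B0: "\<And>x. x \<in> bx d R \<Longrightarrow> \<bar>G x\<bar> \<le> B0" using bddFE[OF bG, where R=R] by blast
    define B where "B = \<bar>B0\<bar> + 1"
    have B: "B > 0" "\<And>x. x \<in> bx d R \<Longrightarrow> \<bar>G x\<bar> \<le> B"
    proof -
      show "B > 0" by (simp add: B_def add_nonneg_pos)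
      fix x assume "x \<in> bx d R"
      then have "\<bar>G x\<bar> \<le> B0" by (rule B0)
      then show "\<bar>G x\<bar> \<le> B" unfolding B_def by linarith
    qed
    define K :: nat where "K = nat \<lceil>4 * R / \<delta>\<rceil>"
    have K1: "real K \<ge> 4 * R / \<delta>" unfolding K_def by (rule real_nat_ceiling_ge)
    have "4 * R / \<delta> > 0" using R d0 by simp
    then have Kpos: "real K > 0" using K1 by linarith
    define \<eta> where "\<eta> = 2 * R / real K"
    have eta0: "\<eta> > 0" using R Kpos by (simp add: \<eta>_def)
    have etaK: "\<eta> * real K = 2 * R" using Kpos by (simp add: \<eta>_def)
    have "4 * R \<le> real K * \<delta>" using K1 d0 by (simp add: divide_le_eq)
    then have "\<eta> * real K \<le> (\<delta>/2) * real K" using etaK by (simp add: mult.commute)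
    then have eta_le: "\<eta> \<le> \<delta>/2" using Kpos by (simp add: mult_le_cancel_right)
    define q where "q \<kappa> = (\<lambda>i. if i < m then -R + real (\<kappa> i) * \<eta> else 0)" for \<kappa> :: "nat \<Rightarrow> nat"
    define P where "P = q ` (PiE {..<m} (\<lambda>_. {..K}))"
    have finP: "finite P" by (simp add: P_def finite_PiE)
    have neP: "P \<noteq> {}" by (simp add: P_def PiE_eq_empty_iff)
    have Pbx: "p \<in> bx d R" "p (d-1) = 0" if pP: "p \<in> P" for p
    proof -
      obtain \<kappa> where k: "\<kappa> \<in> PiE {..<m} (\<lambda>_. {..K})" and p: "p = q \<kappa>" using pP by (auto simp: P_def)
      have "\<bar>p i\<bar> \<le> R" for i
      proof (cases "i < m")
        case True
        then have "\<kappa> i \<le> K" using k by (auto simp: PiE_def Pi_def)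
        then have "real (\<kappa> i) * \<eta> \<le> real K * \<eta>" using eta0 by (intro mult_right_mono) auto
        moreover have "real (\<kappa> i) * \<eta> \<ge> 0" using eta0 by simp
        ultimately show ?thesis using True etaK R by (simp add: p q_def abs_le_iff algebra_simps)
      qed (use R in \<open>simp add: p q_def\<close>)
      moreover have "p i = 0" if "i \<ge> m" for i using that by (simp add: p q_def)
      ultimately show "p \<in> bx d R" "p (d-1) = 0" using m by (auto simp: bx_def Rvec_def)
    qed
    define C where "C = 4 * B / \<delta>"
    have C: "C > 0" "C * (\<delta>/2) = 2 * B" using B d0 by (auto simp: C_def)
    define nrm where "nrm p x = Max ((\<lambda>i. \<bar>x i - p i\<bar>) ` {..<m})" for p x :: "nat \<Rightarrow> real"
    define \<phi> where "\<phi> p x = G p + (-C) * relu (nrm p x + (-\<delta>/2))" for p x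
    define h where "h x = Max ((\<lambda>p. \<phi> p x) ` P)" for x
    have inAh: "inA d h"
    proof -
      have "inA d (nrm p)" for p
      proof -
        have "inA d (\<lambda>x. Max ((\<lambda>i. \<bar>x i + (- p i)\<bar>) ` {..<m}))"
          using m d1 by (intro A_Max A_abs A_add A_coord A_const) (auto simp: lessThan_empty_iff)
        then show ?thesis by (rule A_cong) (simp add: nrm_def)
      qed
      then have "inA d (\<phi> p)" for p
        using C d1 unfolding \<phi>_def by (intro A_add A_const A_scale A_relu) auto
      then have "inA d (\<lambda>x. Max ((\<lambda>p. \<phi> p x) ` P))" by (rule A_Max[OF d1 finP neP])
      then show ?thesis by (rule A_cong) (simp add: h_def)
    qed
    have key: "\<bar>G x - h x\<bar> \<le> \<epsilon>" if x: "x \<in> bx d R0" for x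
    proof -
      have xR: "x \<in> bx d R" using box_mono[OF R(2) x] .
      define x0 where "x0 = x(d-1 := 0)"
      have x0: "x0 \<in> bx d R" using xR R by (auto simp: bx_def x0_def Rvec_def)
      have Gx0: "G x0 = G x" using ind by (simp add: indep_def x0_def)
      have nrm_le_iff: "nrm p x \<le> t \<longleftrightarrow> (\<forall>i<m. \<bar>x i - p i\<bar> \<le> t)" for p t
        unfolding nrm_def using m by (subst nrm_le) (auto simp: lessThan_empty_iff)
      have close: "\<bar>G x - G p\<bar> \<le> \<epsilon>" if "p \<in> P" "nrm p x \<le> \<delta>" for p
      proof -
        have "\<forall>i<d. \<bar>x0 i - p i\<bar> \<le> \<delta>"
        proof (intro allI impI)
          fix i assume "i < d"
          show "\<bar>x0 i - p i\<bar> \<le> \<delta>"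
          proof (cases "i < m")
            case True then show ?thesis using that(2) m by (auto simp: nrm_le_iff x0_def)
          next
            case False then have "i = d - 1" using \<open>i < d\<close> m by simp
            then show ?thesis using Pbx[OF that(1)] d0 by (simp add: x0_def)
          qed
        qed
        then show ?thesis using dd[OF x0 Pbx(1)[OF that(1)]] Gx0 by simp
      qed
      define \<kappa>0 where "\<kappa>0 = restrict (\<lambda>i. nat \<lfloor>(x i + R) / \<eta>\<rfloor>) {..<m}"
      have kin: "\<kappa>0 \<in> PiE {..<m} (\<lambda>_. {..K})"
      proof -
        have "nat \<lfloor>(x i + R) / \<eta>\<rfloor> \<le> K" if "i < m" for i
        proof -
          have "x i \<le> R" using xR that m by (auto simp: bx_def abs_le_iff)
          then have "(x i + R) / \<eta> \<le> real K" using eta0 etaK by (simp add: divide_le_eq algebra_simps)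
          then have "\<lfloor>(x i + R) / \<eta>\<rfloor> \<le> int K" by (metis floor_mono floor_of_nat)
          then show ?thesis by simp
        qed
        then show ?thesis by (auto simp: \<kappa>0_def)
      qed
      define p0 where "p0 = q \<kappa>0"
      have p0P: "p0 \<in> P" using kin by (simp add: P_def p0_def)
      have p0c: "0 \<le> x i - p0 i \<and> x i - p0 i \<le> \<eta>" if "i < m" for i
      proof -
        define t where "t = (x i + R) / \<eta>"
        have "i < d" using that m by simp
        then have "\<bar>x i\<bar> \<le> R" using xR by (simp add: bx_def)
        then have "- R \<le> x i" by (simp add: abs_le_iff)
        then have t0: "t \<ge> 0" using eta0 by (simp add: t_def)
        then have fl0: "\<lfloor>t\<rfloor> \<ge> 0" by simp
        have "p0 i = -R + of_int \<lfloor>t\<rfloor> * \<eta>" using that fl0 by (simp add: p0_def q_def \<kappa>0_def t_def)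
        moreover have "x i = -R + t * \<eta>" using eta0 by (simp add: t_def)
        ultimately have "x i - p0 i = (t - of_int \<lfloor>t\<rfloor>) * \<eta>" by (simp add: algebra_simps)
        moreover have "0 \<le> t - of_int \<lfloor>t\<rfloor>" "t - of_int \<lfloor>t\<rfloor> \<le> 1" by linarith+
        ultimately show ?thesis using eta0 by (simp add: mult_le_cancel_right1)
      qed
      have "nrm p0 x \<le> \<delta>/2" unfolding nrm_le_iff using p0c eta_le by fastforce
      then have "\<phi> p0 x = G p0" by (simp add: \<phi>_def relu_def)
      moreover have "\<phi> p0 x \<le> h x" unfolding h_def using finP p0P by (intro Max_ge) auto
      moreover have "\<bar>G x - G p0\<bar> \<le> \<epsilon>" using close[OF p0P] \<open>nrm p0 x \<le> \<delta>/2\<close> d0 by simp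
      ultimately have low: "G x - \<epsilon> \<le> h x" by (simp add: abs_le_iff)
      have "h x \<in> (\<lambda>p. \<phi> p x) ` P" unfolding h_def using finP neP by (intro Max_in) auto
      then obtain p where pP: "p \<in> P" and hp: "h x = \<phi> p x" by auto
      have up: "h x \<le> G x + \<epsilon>"
      proof (cases "nrm p x \<le> \<delta>")
        case True
        have "\<phi> p x \<le> G p" using C by (simp add: \<phi>_def relu_def)
        then show ?thesis using close[OF pP True] hp by (simp add: abs_le_iff)
      next
        case False
        then have "nrm p x + (-\<delta>/2) \<ge> \<delta>/2" by simp
        then have "relu (nrm p x + (-\<delta>/2)) \<ge> \<delta>/2" unfolding relu_def by linarith
        from mult_left_mono[OF this less_imp_le[OF C(1)]]
        have "C * (\<delta>/2) \<le> C * relu (nrm p x + (-\<delta>/2))" .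
        then have "2 * B \<le> C * relu (nrm p x + (-\<delta>/2))" using C(2) by linarith
        then have "\<phi> p x \<le> G p - 2 * B" unfolding \<phi>_def by linarith
        moreover have "\<bar>G p\<bar> \<le> B" using B(2)[OF Pbx(1)[OF pP]] .
        moreover have "\<bar>G x\<bar> \<le> B" using B(2)[OF xR] .
        ultimately show ?thesis using hp e by (simp add: abs_le_iff)
      qed
      show ?thesis using low up by (simp add: abs_le_iff)
    qed
    have "appr d (addG d h)" using inAh by (simp add: inA_def)
    moreover have "\<forall>x\<in>bx d R0. \<forall>i<d. \<bar>addG d G x i - addG d h x i\<bar> \<le> \<epsilon>"
      using key e by (auto simp: addG_def upd_def abs_minus_commute)
    ultimately show "\<exists>T'. appr d T' \<and> (\<forall>x\<in>bx d R0. \<forall>i<d. \<bar>addG d G x i - T' x i\<bar> \<le> \<epsilon>)" by blast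
  qed
  then show ?thesis using ind uG bG by (simp add: inA_def)
qed



lemma exR_cong: "exR d F \<Longrightarrow> (\<And>x. F x = G x) \<Longrightarrow> exR d G"
proof -
  assume "exR d F" "\<And>x. F x = G x"
  moreover from this(2) have "F = G" by (rule ext)
  ultimately show ?thesis by simp
qed

definition Phi1 :: "nat \<Rightarrow> (real \<Rightarrow> real) \<Rightarrow> bool" where
  "Phi1 d \<phi> \<longleftrightarrow> exR d (\<lambda>x. \<phi> (x (d-1)))"

lemma Phi1_comp: "1 \<le> d \<Longrightarrow> Phi1 d \<phi>1 \<Longrightarrow> Phi1 d \<phi>2 \<Longrightarrow> Phi1 d (\<lambda>y. \<phi>2 (\<phi>1 y))"
  unfolding Phi1_def by (drule (2) exR_comp) (simp add: upd_def)

lemma Phi1_aff: "1 \<le> d \<Longrightarrow> Phi1 d (\<lambda>y. \<alpha> * y + c0)"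
  unfolding Phi1_def by (rule exR_E1a)

lemma Phi1_E2: "1 \<le> d \<Longrightarrow> c > -1 \<Longrightarrow> Phi1 d (\<lambda>y. y + c * relu y)"
  unfolding Phi1_def by (rule exR_E2)

lemma Phi1_kink: assumes d: "1 \<le> d" and c: "c > -1" shows "Phi1 d (\<lambda>y. y + c * relu (y - b))"
proof -
  have h1: "Phi1 d (\<lambda>y. 1 * y + (-b))" by (rule Phi1_aff[OF d])
  have h2: "Phi1 d (\<lambda>y. y + c * relu y)" by (rule Phi1_E2[OF d c])
  have h3: "Phi1 d (\<lambda>y. 1 * ((1 * y + (-b)) + c * relu (1 * y + (-b))) + b)"
    by (rule Phi1_comp[OF d Phi1_comp[OF d h1 h2] Phi1_aff[OF d]])
  have "(\<lambda>y. 1 * ((1 * y + (-b)) + c * relu (1 * y + (-b))) + b) = (\<lambda>y. y + c * relu (y - b))"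
    by (rule ext) simp
  with h3 show ?thesis by simp
qed

lemma Phi1_id: "1 \<le> d \<Longrightarrow> Phi1 d (\<lambda>y. y)"
  using Phi1_aff[of d 1 0] by simp

lemma kink_mono: assumes c: "c > -1" and z: "z1 < z2"
  shows "z1 + c * relu (z1 - t) < z2 + c * relu (z2 - t)"
proof -
  define D where "D = relu (z2 - t) - relu (z1 - t)"
  have D: "0 \<le> D" "D \<le> z2 - z1" using z by (auto simp: D_def relu_def max_def)
  show ?thesis
  proof (cases "c \<ge> 0")
    case True
    then have "c * D \<ge> 0" using D by simp
    then show ?thesis using z by (simp add: D_def algebra_simps)
  next
    case False
    then have "c * D \<ge> c * (z2 - z1)" using D by (intro mult_left_mono_neg) auto
    moreover have "(1 + c) * (z2 - z1) > 0" using c z by simp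
    ultimately show ?thesis using z by (simp add: D_def algebra_simps)
  qed
qed

definition Qf :: "(nat \<Rightarrow> real) \<Rightarrow> (nat \<Rightarrow> real) \<Rightarrow> nat \<Rightarrow> real \<Rightarrow> real" where
  "Qf c b j y = y + (\<Sum>k<j. c k * relu (y - b k))"

lemma Qf_lin: assumes b: "strict_mono b" and y: "b j \<le> y"
  shows "Qf c b j y - Qf c b j (b j) = (1 + (\<Sum>k<j. c k)) * (y - b j)"
proof -
  have r: "relu (y - b k) = y - b k" "relu (b j - b k) = b j - b k" if "k < j" for k
    using strict_monoD[OF b that] y by (auto simp: relu_def)
  have "(\<Sum>k<j. c k * relu (y - b k)) - (\<Sum>k<j. c k * relu (b j - b k)) = (\<Sum>k<j. c k * (y - b j))"
    unfolding sum_subtractf[symmetric] by (rule sum.cong) (auto simp: r algebra_simps)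
  then have "Qf c b j y - Qf c b j (b j) = (y - b j) + (\<Sum>k<j. c k * (y - b j))"
    by (simp add: Qf_def)
  also have "\<dots> = (y - b j) + (\<Sum>k<j. c k) * (y - b j)"
    by (simp only: sum_distrib_right)
  also have "\<dots> = (1 + (\<Sum>k<j. c k)) * (y - b j)"
    by (simp add: ring_distribs)
  finally show ?thesis .
qed

lemma Qf_good:
  assumes d: "1 \<le> d" and b: "strict_mono b" and sl: "\<And>j. j \<le> n \<Longrightarrow> 1 + (\<Sum>k<j. c k) > 0"
  shows "j \<le> n \<Longrightarrow> Phi1 d (Qf c b j) \<and> strict_mono (Qf c b j)"
proof (induction j)
  case 0
  then show ?case using Phi1_id[OF d] by (simp add: Qf_def[abs_def] strict_mono_def)
next
  case (Suc j)
  then have IH: "Phi1 d (Qf c b j)" "strict_mono (Qf c b j)" by auto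
  define s where "s = 1 + (\<Sum>k<j. c k)"
  have s: "s > 0" using sl[of j] Suc.prems by (simp add: s_def)
  have s1: "s + c j > 0" using sl[of "Suc j"] Suc.prems by (simp add: s_def add.assoc)
  define c' where "c' = c j / s"
  have c': "c' > -1" using s s1 by (simp add: c'_def field_simps)
  define t where "t = Qf c b j (b j)"
  have eq: "Qf c b j y + c' * relu (Qf c b j y - t) = Qf c b (Suc j) y" for y
  proof (cases "b j \<le> y")
    case True
    have "Qf c b j y - t = s * (y - b j)" using Qf_lin[OF b True] by (simp add: t_def s_def)
    then have "c' * relu (Qf c b j y - t) = c j * relu (y - b j)"
      using s True by (simp add: c'_def relu_scale relu_def)
    then show ?thesis by (simp add: Qf_def)
  next
    case False
    then have "Qf c b j y < t" using IH(2) by (simp add: t_def strict_mono_less)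
    then show ?thesis using False by (simp add: Qf_def relu_def)
  qed
  have "Phi1 d (\<lambda>y. Qf c b j y + c' * relu (Qf c b j y - t))"
    using d IH(1) Phi1_kink[OF d c'] by (rule Phi1_comp)
  then have "Phi1 d (Qf c b (Suc j))" unfolding eq[abs_def] .
  moreover have "strict_mono (Qf c b (Suc j))"
    unfolding strict_mono_def eq[symmetric]
    using IH(2) kink_mono[OF c'] by (simp add: strict_mono_less)
  ultimately show ?case by simp
qed



lemma Phi1_cong: "Phi1 d f \<Longrightarrow> (\<And>y. f y = g y) \<Longrightarrow> Phi1 d g"
proof -
  assume "Phi1 d f" "\<And>y. f y = g y"
  moreover from this(2) have "f = g" by (rule ext)
  ultimately show ?thesis by simp
qed

lemma interp_exists:
  assumes d: "1 \<le> d" and psi: "strict_mono (\<psi> :: real \<Rightarrow> real)" and h: "h > 0"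
  shows "\<exists>P. Phi1 d P \<and> mono P \<and> (\<forall>j\<le>n. P (a + real j * h) = \<psi> (a + real j * h))"
proof -
  define b where "b k = a + real k * h" for k
  have bsm: "strict_mono b" using h by (auto simp: strict_mono_def b_def)
  have bS: "b (Suc k) = b k + h" for k by (simp add: b_def algebra_simps)
  define \<sigma> where "\<sigma> k = (\<psi> (b (Suc k)) - \<psi> (b k)) / h" for k
  have \<sigma>: "\<sigma> k > 0" for k using strict_monoD[OF bsm, of k "Suc k"] psi h
    by (simp add: \<sigma>_def strict_mono_less)
  define sl where "sl k = (if k = 0 then \<sigma> 0 else \<sigma> (k - 1))" for k
  have sl: "sl k > 0" for k using \<sigma> by (simp add: sl_def)
  have slS: "sl (Suc k) = \<sigma> k" for k by (simp add: sl_def)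
  define \<tau> where "\<tau> = sl 0"
  have tau: "\<tau> > 0" using sl by (simp add: \<tau>_def)
  define cP where "cP k = sl (Suc k) - sl k" for k
  define c where "c k = cP k / \<tau>" for k
  have sumc: "1 + (\<Sum>k<j. c k) = sl j / \<tau>" for j
  proof -
    have "(\<Sum>k<j. c k) = (\<Sum>k<j. cP k) / \<tau>" by (simp add: c_def sum_divide_distrib)
    also have "(\<Sum>k<j. cP k) = sl j - sl 0" unfolding cP_def by (rule sum_lessThan_telescope)
    finally show ?thesis using tau by (simp add: \<tau>_def field_simps)
  qed
  have slope: "1 + (\<Sum>k<j. c k) > 0" for j using sumc[of j] sl[of j] tau by simp
  have Q: "Phi1 d (Qf c b n) \<and> strict_mono (Qf c b n)"
    using Qf_good[OF d bsm slope, where n=n and j=n] by simp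
  define P where "P y = \<tau> * Qf c b n y + (\<psi> a - \<tau> * a)" for y
  have PP: "Phi1 d P"
    using Phi1_comp[OF d conjunct1[OF Q] Phi1_aff[OF d, of \<tau> "\<psi> a - \<tau> * a"]] unfolding P_def[abs_def] .
  have Pm: "mono P"
  proof (rule monoI)
    fix u v :: real assume "u \<le> v"
    then have "Qf c b n u \<le> Qf c b n v" using conjunct2[OF Q] by (simp add: strict_mono_less_eq)
    then show "P u \<le> P v" using tau by (simp add: P_def)
  qed
  have Pform: "P y = \<psi> a + \<tau> * (y - a) + (\<Sum>k<n. cP k * relu (y - b k))" for y
  proof -
    have "\<tau> * (\<Sum>k<n. c k * relu (y - b k)) = (\<Sum>k<n. cP k * relu (y - b k))"
      using tau by (simp add: sum_distrib_left c_def)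
    then show ?thesis by (simp add: P_def Qf_def algebra_simps)
  qed
  define L where "L j = \<tau> * (b j - a) + (\<Sum>k<j. cP k * (b j - b k))" for j
  have L: "L j = \<psi> (b j) - \<psi> a" for j
  proof (induction j)
    case 0 then show ?case by (simp add: L_def b_def)
  next
    case (Suc j)
    have "(\<Sum>k<j. cP k * (b (Suc j) - b k)) = (\<Sum>k<j. cP k * (b j - b k) + h * cP k)"
      by (rule sum.cong) (simp_all add: bS algebra_simps)
    also have "\<dots> = (\<Sum>k<j. cP k * (b j - b k)) + h * (\<Sum>k<j. cP k)"
      by (simp add: sum.distrib sum_distrib_left)
    finally have "(\<Sum>k<j. cP k * (b (Suc j) - b k)) = (\<Sum>k<j. cP k * (b j - b k)) + h * (\<Sum>k<j. cP k)" .
    moreover have "(\<Sum>k<j. cP k) = sl j - sl 0" unfolding cP_def by (rule sum_lessThan_telescope)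
    ultimately have "L (Suc j) = L j + h * (\<tau> + (sl j - sl 0) + cP j)"
      by (simp add: L_def bS algebra_simps)
    also have "\<tau> + (sl j - sl 0) + cP j = \<sigma> j" by (simp add: \<tau>_def cP_def slS)
    also have "L j + h * \<sigma> j = \<psi> (b (Suc j)) - \<psi> a" using Suc h by (simp add: \<sigma>_def)
    finally show ?case .
  qed
  have Pb: "P (b j) = \<psi> (b j)" if "j \<le> n" for j
  proof -
    have "(\<Sum>k<n. cP k * relu (b j - b k)) = (\<Sum>k<j. cP k * relu (b j - b k)) + (\<Sum>k\<in>{j..<n}. cP k * relu (b j - b k))"
      using that by (simp add: lessThan_atLeast0 sum.atLeastLessThan_concat)
    moreover have "(\<Sum>k\<in>{j..<n}. cP k * relu (b j - b k)) = 0"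
    proof (rule sum.neutral, rule ballI)
      fix k assume "k \<in> {j..<n}"
      then have "b j \<le> b k" using bsm by (simp add: strict_mono_less_eq)
      then show "cP k * relu (b j - b k) = 0" by (simp add: relu_def)
    qed
    moreover have "(\<Sum>k<j. cP k * relu (b j - b k)) = (\<Sum>k<j. cP k * (b j - b k))"
    proof (rule sum.cong)
      fix k assume "k \<in> {..<j}"
      then have "b k < b j" using bsm by (simp add: strict_mono_less)
      then show "cP k * relu (b j - b k) = cP k * (b j - b k)" by (simp add: relu_def)
    qed simp
    ultimately show ?thesis using L[of j] by (simp add: Pform L_def)
  qed
  show ?thesis using PP Pm Pb by (auto simp: b_def)
qed



lemma one_dim_good:
  assumes d: "1 \<le> d" and psi: "strict_mono \<psi>" and cont: "continuous_on UNIV \<psi>"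
  shows "good d (upd d (\<lambda>x. \<psi> (x (d-1))))"
proof (rule good_upd[OF d])
  show "bddF d (\<lambda>x. \<psi> (x (d-1)))" by (rule bddF_comp[OF bddF_coord cont])
  show "ucF d (\<lambda>x. \<psi> (x (d-1)))" by (rule ucF_comp[OF bddF_coord ucF_coord cont])
  show "appr d (upd d (\<lambda>x. \<psi> (x (d-1))))" unfolding appr_def
  proof (intro allI impI)
    fix R \<epsilon> :: real assume e: "\<epsilon> > 0"
    define R' where "R' = \<bar>R\<bar> + 1"
    have R': "R' > 0" by (simp add: R'_def add_nonneg_pos)
    have "uniformly_continuous_on {-R'..R'} \<psi>"
      by (rule compact_uniformly_continuous) (auto intro: continuous_on_subset[OF cont])
    then have "\<exists>e1>0. \<forall>u\<in>{-R'..R'}. \<forall>v\<in>{-R'..R'}. dist v u < e1 \<longrightarrow> dist (\<psi> v) (\<psi> u) < \<epsilon>"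
      unfolding uniformly_continuous_on_def using e by simp
    then obtain e1 where e1: "e1 > 0" and H: "\<forall>u\<in>{-R'..R'}. \<forall>v\<in>{-R'..R'}. dist v u < e1 \<longrightarrow> dist (\<psi> v) (\<psi> u) < \<epsilon>"
      by blast
    define n :: nat where "n = nat \<lceil>4 * R' / e1\<rceil>"
    have n1: "real n \<ge> 4 * R' / e1" unfolding n_def by (rule real_nat_ceiling_ge)
    have "4 * R' / e1 > 0" using R' e1 by simp
    then have npos: "real n > 0" using n1 by linarith
    then have nge: "n \<ge> 1" by simp
    define h where "h = 2 * R' / real n"
    have h0: "h > 0" using R' npos by (simp add: h_def)
    have hn: "h * real n = 2 * R'" using npos by (simp add: h_def)
    have "4 * R' \<le> real n * e1" using n1 e1 by (simp add: divide_le_eq)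
    then have "h * real n < e1 * real n" using hn R' by (simp add: mult.commute)
    then have he: "h < e1" using npos by simp
    define a where "a = - R'"
    obtain P where P: "Phi1 d P" "mono P" "\<And>j. j \<le> n \<Longrightarrow> P (a + real j * h) = \<psi> (a + real j * h)"
      using interp_exists[OF d psi h0, of n a] by blast
    obtain g where g: "g \<in> NN_LReLU d" "\<And>x. x \<in> boxp d R \<Longrightarrow> g x = upd d (\<lambda>x. P (x (d-1))) x"
      using P(1) unfolding Phi1_def exR_def by blast
    have bnd: "a + real j * h \<in> {-R'..R'}" if "j \<le> n" for j
    proof -
      have "real j * h \<le> real n * h" using that h0 by (intro mult_right_mono) auto
      then show ?thesis using hn h0 by (auto simp: a_def algebra_simps)
    qed
    have main: "\<bar>\<psi> y - P y\<bar> \<le> \<epsilon>" if y: "y \<in> {-R'..R'}" for y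
    proof -
      define t where "t = (y - a) / h"
      have t0: "t \<ge> 0" using y h0 by (simp add: t_def a_def)
      have tn: "t \<le> real n" using y h0 hn by (simp add: t_def a_def divide_le_eq algebra_simps)
      define f where "f = nat \<lfloor>t\<rfloor>"
      have f1: "real f \<le> t" using t0 by (simp add: f_def)
      have f2: "t < real f + 1" using t0 by (simp add: f_def)
      define j where "j = min (n - 1) f"
      have jn: "Suc j \<le> n" using nge by (simp add: j_def)
      have yt: "y = a + t * h" using h0 by (simp add: t_def)
      have lo: "a + real j * h \<le> y"
      proof -
        have "real j \<le> t" using f1 by (simp add: j_def)
        then show ?thesis using yt h0 by (simp add: mult_right_mono)
      qed
      have hi: "y \<le> a + real (Suc j) * h"
      proof (cases "f \<le> n - 1")
        case True
        then have "j = f" by (simp add: j_def)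
        then have "t \<le> real (Suc j)" using f2 by simp
        then show ?thesis using yt h0 by (simp add: mult_right_mono)
      next
        case False
        then have "Suc j = n" using nge by (simp add: j_def)
        then show ?thesis using yt h0 tn by (simp add: mult_right_mono)
      qed
      have m1: "P (a + real j * h) \<le> P y" "P y \<le> P (a + real (Suc j) * h)"
        using P(2) lo hi by (auto simp: mono_def)
      have psim: "mono \<psi>" using psi by (rule strict_mono_mono)
      have m2: "\<psi> (a + real j * h) \<le> \<psi> y" "\<psi> y \<le> \<psi> (a + real (Suc j) * h)"
        using psim lo hi by (auto simp: mono_def)
      have "dist (a + real (Suc j) * h) (a + real j * h) < e1"
        using he h0 by (simp add: dist_real_def algebra_simps)
      then have "dist (\<psi> (a + real (Suc j) * h)) (\<psi> (a + real j * h)) < \<epsilon>"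
        using H bnd[of j] bnd[of "Suc j"] jn by auto
      then show ?thesis using m1 m2 P(3)[of j] P(3)[OF jn] jn
        by (simp add: dist_real_def abs_le_iff)
    qed
    show "\<exists>g\<in>NN_LReLU d. \<forall>x\<in>bx d R. \<forall>i<d. \<bar>upd d (\<lambda>x. \<psi> (x (d-1))) x i - g x i\<bar> \<le> \<epsilon>"
    proof (intro bexI[OF _ g(1)] ballI allI impI)
      fix x i assume x: "x \<in> bx d R" and i: "i < d"
      have gx: "g x = upd d (\<lambda>x. P (x (d-1))) x" using g(2) box_boxp[OF x] .
      have "\<bar>x (d-1)\<bar> \<le> R" using x d by (simp add: bx_def)
      then have "x (d-1) \<in> {-R'..R'}" by (simp add: R'_def abs_le_iff)
      from main[OF this] show "\<bar>upd d (\<lambda>x. \<psi> (x (d-1))) x i - g x i\<bar> \<le> \<epsilon>"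
        using e by (simp add: gx upd_def)
    qed
  qed
qed



definition proj :: "nat \<Rightarrow> (nat \<Rightarrow> real) \<Rightarrow> (nat \<Rightarrow> real)" where
  "proj d x = (\<lambda>i. if i < d - 1 then x i else 0)"

lemma proj_upd: "proj d (x(d-1 := v)) = proj d x"
  by (rule ext) (simp add: proj_def)

lemma indep_proj: "indep d (\<lambda>x. s (proj d x))"
  unfolding indep_def proj_upd by simp

definition QQ :: "nat \<Rightarrow> real \<Rightarrow> (nat \<Rightarrow> real) set" where
  "QQ m R = PiE UNIV (\<lambda>i. if i < m then {-R..R} else {0})"

lemma compact_QQ: "compact (QQ m R)"
proof -
  have "compactin (product_topology (\<lambda>i. euclidean) UNIV) (QQ m R)"
    unfolding QQ_def compactin_PiE by auto
  then show ?thesis by (simp add: euclidean_product_topology)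
qed

lemma QQ_iff: "z \<in> QQ m R \<longleftrightarrow> (\<forall>i. z i \<in> (if i < m then {-R..R} else {0}))"
  by (simp add: QQ_def PiE_iff)

lemma QQ_Rvec: "QQ m R \<subseteq> Rvec m"
proof
  fix z assume "z \<in> QQ m R"
  then have "\<forall>i. z i \<in> (if i < m then {-R..R} else {0})" by (simp add: QQ_iff)
  then have "z i = 0" if "i \<ge> m" for i using that by (metis (full_types) not_le singletonD)
  then show "z \<in> Rvec m" unfolding Rvec_def by simp
qed

lemma proj_QQ: assumes x: "x \<in> bx d R" shows "proj d x \<in> QQ (d - 1) R"
  unfolding QQ_iff
proof
  fix i
  show "proj d x i \<in> (if i < d - 1 then {-R..R} else {0})"
  proof (cases "i < d - 1")
    case True
    then have "\<bar>x i\<bar> \<le> R" using x by (simp add: bx_def)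
    then show ?thesis using True by (simp add: proj_def abs_le_iff)
  qed (simp add: proj_def)
qed

lemma dist_fun_small:
  fixes z z' :: "nat \<Rightarrow> real"
  assumes "\<And>k. \<bar>z k - z' k\<bar> \<le> \<delta>" "\<delta> \<ge> 0"
  shows "dist z z' \<le> 2 * \<delta> + (1/2)^N"
proof -
  have "Max {dist (z (from_nat n)) (z' (from_nat n)) |n. n \<le> N} \<le> \<delta>"
  proof (subst Max_le_iff)
    have "{dist (z (from_nat n)) (z' (from_nat n)) |n. n \<le> N} = (\<lambda>n. dist (z (from_nat n)) (z' (from_nat n))) ` {..N}"
      by auto
    then show "finite {dist (z (from_nat n)) (z' (from_nat n)) |n. n \<le> N}" by simp
    show "{dist (z (from_nat n)) (z' (from_nat n)) |n. n \<le> N} \<noteq> {}" by auto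
    show "\<forall>a\<in>{dist (z (from_nat n)) (z' (from_nat n)) |n. n \<le> N}. a \<le> \<delta>"
      using assms by (auto simp: dist_real_def)
  qed
  then show ?thesis using dist_fun_le_dist_first_terms[of z z' N] by linarith
qed

lemma cont_ucF_bddF:
  assumes d: "2 \<le> d" and s: "continuous_on (Rvec (d - 1)) s"
  shows "ucF d (\<lambda>x. s (proj d x))" "bddF d (\<lambda>x. s (proj d x))"
proof -
  show "bddF d (\<lambda>x. s (proj d x))" unfolding bddF_def
  proof
    fix R
    have "compact (s ` QQ (d-1) R)"
      by (rule compact_continuous_image[OF continuous_on_subset[OF s QQ_Rvec] compact_QQ])
    then have "bounded (s ` QQ (d-1) R)" by (rule compact_imp_bounded)
    then obtain C where C: "\<And>u. u \<in> s ` QQ (d-1) R \<Longrightarrow> norm u \<le> C" unfolding bounded_iff by blast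
    have "\<bar>s (proj d x)\<bar> \<le> C" if "x \<in> bx d R" for x using C[of "s (proj d x)"] proj_QQ[OF that] by simp
    then show "\<exists>B. \<forall>x\<in>bx d R. \<bar>s (proj d x)\<bar> \<le> B" by blast
  qed
  show "ucF d (\<lambda>x. s (proj d x))" unfolding ucF_def
  proof (intro allI impI)
    fix R \<epsilon> :: real assume e: "\<epsilon> > 0"
    have "uniformly_continuous_on (QQ (d-1) R) s"
      by (rule compact_uniformly_continuous[OF continuous_on_subset[OF s QQ_Rvec] compact_QQ])
    then have "\<exists>e1>0. \<forall>u\<in>QQ (d-1) R. \<forall>v\<in>QQ (d-1) R. dist v u < e1 \<longrightarrow> dist (s v) (s u) < \<epsilon>"
      unfolding uniformly_continuous_on_def using e by simp
    then obtain e1 where e1: "e1 > 0" and H: "\<forall>u\<in>QQ (d-1) R. \<forall>v\<in>QQ (d-1) R. dist v u < e1 \<longrightarrow> dist (s v) (s u) < \<epsilon>"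
      by blast
    obtain N where N: "(1/2::real)^N < e1/2" using real_arch_pow_inv[of "e1/2" "1/2"] e1 by auto
    show "\<exists>\<delta>>0. \<forall>x\<in>bx d R. \<forall>y\<in>bx d R. (\<forall>i<d. \<bar>x i - y i\<bar> \<le> \<delta>) \<longrightarrow> \<bar>s (proj d x) - s (proj d y)\<bar> \<le> \<epsilon>"
    proof (intro exI[of _ "e1/8"] conjI ballI impI)
      fix x y assume x: "x \<in> bx d R" and y: "y \<in> bx d R" and xy: "\<forall>i<d. \<bar>x i - y i\<bar> \<le> e1/8"
      have "\<bar>proj d x k - proj d y k\<bar> \<le> e1/8" for k using xy e1 by (auto simp: proj_def)
      then have "dist (proj d x) (proj d y) \<le> 2 * (e1/8) + (1/2)^N" using e1 by (intro dist_fun_small) auto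
      then have "dist (proj d x) (proj d y) < e1" using N e1 by linarith
      then have "dist (s (proj d x)) (s (proj d y)) < \<epsilon>" using H proj_QQ[OF x] proj_QQ[OF y] by auto
      then show "\<bar>s (proj d x) - s (proj d y)\<bar> \<le> \<epsilon>" by (simp add: dist_real_def)
    qed (use e1 in simp)
  qed
qed



lemma fin_bnd:
  assumes "finite I" "\<And>i. i \<in> I \<Longrightarrow> \<exists>B. \<forall>x\<in>S. \<bar>f i x\<bar> \<le> (B::real)"
  shows "\<exists>B. \<forall>i\<in>I. \<forall>x\<in>S. \<bar>f i x\<bar> \<le> B"
  using assms
proof (induction I rule: finite_induct)
  case empty then show ?case by simp
next
  case (insert a I)
  obtain B1 where B1: "\<forall>x\<in>S. \<bar>f a x\<bar> \<le> B1" using insert.prems by blast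
  obtain B2 where B2: "\<forall>i\<in>I. \<forall>x\<in>S. \<bar>f i x\<bar> \<le> B2" using insert by blast
  have "\<forall>i\<in>insert a I. \<forall>x\<in>S. \<bar>f i x\<bar> \<le> max B1 B2"
    using B1 B2 by (auto intro: le_max_iff_disj[THEN iffD2])
  then show ?case by blast
qed

lemma fin_del:
  fixes S :: "(nat \<Rightarrow> real) set"
  assumes "finite I" "\<And>i. i \<in> I \<Longrightarrow> \<exists>\<delta>>0. \<forall>x\<in>S. \<forall>y\<in>S. (\<forall>k<d. \<bar>x k - y k\<bar> \<le> \<delta>) \<longrightarrow> \<bar>f i x - f i y\<bar> \<le> (\<epsilon>::real)"
  shows "\<exists>\<delta>>0. \<forall>i\<in>I. \<forall>x\<in>S. \<forall>y\<in>S. (\<forall>k<d. \<bar>x k - y k\<bar> \<le> \<delta>) \<longrightarrow> \<bar>f i x - f i y\<bar> \<le> \<epsilon>"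
  using assms
proof (induction I rule: finite_induct)
  case empty
  show ?case by (rule exI[of _ "1::real"]) simp
next
  case (insert a I)
  obtain d1 where d1: "d1 > 0" "\<forall>x\<in>S. \<forall>y\<in>S. (\<forall>k<d. \<bar>x k - y k\<bar> \<le> d1) \<longrightarrow> \<bar>f a x - f a y\<bar> \<le> \<epsilon>"
    using insert.prems by blast
  obtain d2 where d2: "d2 > 0" "\<forall>i\<in>I. \<forall>x\<in>S. \<forall>y\<in>S. (\<forall>k<d. \<bar>x k - y k\<bar> \<le> d2) \<longrightarrow> \<bar>f i x - f i y\<bar> \<le> \<epsilon>"
    using insert by blast
  have "\<forall>i\<in>insert a I. \<forall>x\<in>S. \<forall>y\<in>S. (\<forall>k<d. \<bar>x k - y k\<bar> \<le> min d1 d2) \<longrightarrow> \<bar>f i x - f i y\<bar> \<le> \<epsilon>"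
  proof (intro ballI impI)
    fix i x y assume i: "i \<in> insert a I" and x: "x \<in> S" and y: "y \<in> S" and xy: "\<forall>k<d. \<bar>x k - y k\<bar> \<le> min d1 d2"
    have "\<forall>k<d. \<bar>x k - y k\<bar> \<le> d1" "\<forall>k<d. \<bar>x k - y k\<bar> \<le> d2" using xy by auto
    then show "\<bar>f i x - f i y\<bar> \<le> \<epsilon>" using i d1(2) d2(2) x y by auto
  qed
  moreover have "min d1 d2 > 0" using d1 d2 by simp
  ultimately show ?case by blast
qed

lemma bddT_coords:
  assumes "\<And>i. i < d \<Longrightarrow> bddF d (\<lambda>x. T x i)" "\<And>x. x \<in> Rvec d \<Longrightarrow> T x \<in> Rvec d"
  shows "bddT d T"
  unfolding bddT_def
proof
  fix R
  have "\<exists>B. \<forall>i\<in>{..<d}. \<forall>x\<in>bx d R. \<bar>T x i\<bar> \<le> B"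
  proof (rule fin_bnd)
    fix i assume "i \<in> {..<d}"
    then have "bddF d (\<lambda>x. T x i)" using assms(1) by simp
    then show "\<exists>B. \<forall>x\<in>bx d R. \<bar>T x i\<bar> \<le> B" unfolding bddF_def by simp
  qed simp
  then obtain B where B: "\<forall>i\<in>{..<d}. \<forall>x\<in>bx d R. \<bar>T x i\<bar> \<le> B" by blast
  have "T x \<in> bx d B" if "x \<in> bx d R" for x
    using B that assms(2) by (auto simp: bx_def)
  then show "\<exists>R1. \<forall>x\<in>bx d R. T x \<in> bx d R1" by blast
qed

lemma ucT_coords:
  assumes "\<And>i. i < d \<Longrightarrow> ucF d (\<lambda>x. T x i)"
  shows "ucT d T"
  unfolding ucT_def
proof (intro allI impI)
  fix R \<epsilon> :: real assume e: "\<epsilon> > 0"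
  have "\<exists>\<delta>>0. \<forall>i\<in>{..<d}. \<forall>x\<in>bx d R. \<forall>y\<in>bx d R. (\<forall>k<d. \<bar>x k - y k\<bar> \<le> \<delta>) \<longrightarrow> \<bar>T x i - T y i\<bar> \<le> \<epsilon>"
  proof (rule fin_del)
    fix i assume "i \<in> {..<d}"
    then have "ucF d (\<lambda>x. T x i)" using assms(1) by simp
    then show "\<exists>\<delta>>0. \<forall>x\<in>bx d R. \<forall>y\<in>bx d R. (\<forall>k<d. \<bar>x k - y k\<bar> \<le> \<delta>) \<longrightarrow> \<bar>T x i - T y i\<bar> \<le> \<epsilon>"
      unfolding ucF_def using e by simp
  qed simp
  then show "\<exists>\<delta>>0. \<forall>x\<in>bx d R. \<forall>y\<in>bx d R. (\<forall>i<d. \<bar>x i - y i\<bar> \<le> \<delta>) \<longrightarrow> (\<forall>i<d. \<bar>T x i - T y i\<bar> \<le> \<epsilon>)"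
    by auto
qed

lemma bddF_sum: "finite J \<Longrightarrow> (\<And>j. j \<in> J \<Longrightarrow> bddF d (F j)) \<Longrightarrow> bddF d (\<lambda>x. \<Sum>j\<in>J. F j x)"
proof (induction J rule: finite_induct)
  case empty then show ?case using bddF_const[of d 0] by simp
next
  case (insert a J)
  then show ?case using bddF_add[of d "F a" "\<lambda>x. \<Sum>j\<in>J. F j x"] by simp
qed

lemma ucF_sum: "finite J \<Longrightarrow> (\<And>j. j \<in> J \<Longrightarrow> ucF d (F j)) \<Longrightarrow> ucF d (\<lambda>x. \<Sum>j\<in>J. F j x)"
proof (induction J rule: finite_induct)
  case empty then show ?case using ucF_const[of d 0] by simp
next
  case (insert a J)
  then show ?case using ucF_add[of d "F a" "\<lambda>x. \<Sum>j\<in>J. F j x"] by simp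
qed

lemma aff_good: "good d (aff A b d d)"
proof -
  have "aff A b d d \<in> NN_LReLU d" by (simp add: NN_LReLU_def nn_pre.first)
  then have ap: "appr d (aff A b d d)" unfolding appr_def by (intro allI impI bexI[of _ "aff A b d d"]) auto
  have co: "(\<lambda>x. aff A b d d x i) = (\<lambda>x. (\<Sum>j<d. A i j * x j) + b i)" if "i < d" for i
    using that by (simp add: aff_def)
  have "bddF d (\<lambda>x. aff A b d d x i)" if "i < d" for i
    unfolding co[OF that]
    by (intro bddF_add[OF _ bddF_const] bddF_sum) (auto intro: bddF_mult[OF bddF_const bddF_coord])
  moreover have "ucF d (\<lambda>x. aff A b d d x i)" if "i < d" for i
    unfolding co[OF that]
    by (intro ucF_add[OF _ ucF_const] ucF_sum) (auto intro: ucF_mult[OF ucF_const ucF_coord bddF_const bddF_coord])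
  moreover have "x \<in> Rvec d \<Longrightarrow> aff A b d d x \<in> Rvec d" for x by (simp add: aff_def Rvec_def)
  ultimately show ?thesis using ap by (simp add: good_def bddT_coords ucT_coords)
qed



definition psiL :: "real \<Rightarrow> real" where
  "psiL z = ln (max z 1) + min (z - 1) 0"

lemma psiL_cont: "continuous_on UNIV psiL"
  unfolding psiL_def by (intro continuous_intros) auto

lemma psiL_mono: "strict_mono psiL"
proof (rule strict_monoI)
  fix u v :: real assume uv: "u < v"
  have a: "ln (max u 1) \<le> ln (max v 1)" using uv by simp
  have b: "min (u - 1) 0 \<le> min (v - 1) 0" using uv by simp
  show "psiL u < psiL v"
  proof (cases "v \<le> 1")
    case True
    then have "min (u - 1) 0 < min (v - 1) 0" using uv by simp
    then show ?thesis unfolding psiL_def by (rule add_le_less_mono[OF a])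
  next
    case False
    then have "max u 1 < max v 1" using uv by simp
    then have "ln (max u 1) < ln (max v 1)" by simp
    then show ?thesis unfolding psiL_def by (rule add_less_le_mono[OF _ b])
  qed
qed

lemma proj_upd': "proj d (x(d - Suc 0 := v)) = proj d x"
  by (rule ext) (simp add: proj_def)

lemma exp_cont: "continuous_on UNIV (exp :: real \<Rightarrow> real)"
  by (intro continuous_intros)

lemma acf_good:
  assumes d: "2 \<le> d" and s: "continuous_on (Rvec (d - 1)) s" and t: "continuous_on (Rvec (d - 1)) t"
  shows "good d (acf_map d s t)"
proof -
  have d1: "1 \<le> d" using d by simp
  obtain us bs where us: "ucF d (\<lambda>x. s (proj d x))" and bs: "bddF d (\<lambda>x. s (proj d x))"
    using cont_ucF_bddF[OF d s] by blast
  obtain ut bt where ut: "ucF d (\<lambda>x. t (proj d x))" and bt: "bddF d (\<lambda>x. t (proj d x))"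
    using cont_ucF_bddF[OF d t] by blast
  have ueS: "ucF d (\<lambda>x. exp (s (proj d x)))" by (rule ucF_comp[OF bs us exp_cont])
  have beS: "bddF d (\<lambda>x. exp (s (proj d x)))" by (rule bddF_comp[OF bs exp_cont])
  define F where "F x = exp (s (proj d x)) * x (d-1) + t (proj d x)" for x
  have acf: "acf_map d s t = upd d F"
    by (rule ext) (simp add: acf_map_def upd_def proj_def F_def Let_def)
  have bF: "bddF d F" unfolding F_def[abs_def]
    by (rule bddF_add[OF bddF_mult[OF beS bddF_coord] bt])
  have uF: "ucF d F" unfolding F_def[abs_def]
    by (rule ucF_add[OF ucF_mult[OF ueS ucF_coord beS bddF_coord] ut])
  have "appr d (upd d F)" unfolding appr_def
  proof (intro allI impI)
    fix R \<epsilon> :: real assume e: "\<epsilon> > 0"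
    define c where "c = \<bar>R\<bar> + 1"
    let ?T1 = "upd d (\<lambda>x. 1 * x (d-1) + c)"
    let ?T2 = "upd d (\<lambda>x. psiL (x (d-1)))"
    let ?T3 = "addG d (\<lambda>x. s (proj d x))"
    let ?T4 = "upd d (\<lambda>x. exp (x (d-1)))"
    let ?G5 = "\<lambda>x. t (proj d x) + (- c) * exp (s (proj d x))"
    let ?T5 = "addG d ?G5"
    have g1: "good d ?T1"
      by (rule good_upd[OF d1 bddF_add[OF bddF_mult[OF bddF_const bddF_coord] bddF_const]
            ucF_add[OF ucF_mult[OF ucF_const ucF_coord bddF_const bddF_coord] ucF_const]
            exR_appr[OF exR_E1a[OF d1]]])
    have g2: "good d ?T2" by (rule one_dim_good[OF d1 psiL_mono psiL_cont])
    have g3: "good d ?T3" by (rule A_good[OF d1 A_dense[OF d indep_proj us bs]])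
    have emono: "strict_mono (exp :: real \<Rightarrow> real)" by (rule strict_monoI) simp
    have g4: "good d ?T4" by (rule one_dim_good[OF d1 emono exp_cont])
    have i5: "indep d ?G5" unfolding indep_def proj_upd by simp
    have g5: "good d ?T5"
      by (rule A_good[OF d1 A_dense[OF d i5 ucF_add[OF ut ucF_mult[OF ucF_const ueS bddF_const beS]]
             bddF_add[OF bt bddF_mult[OF bddF_const beS]]]])
    have "good d (?T5 \<circ> ?T4 \<circ> ?T3 \<circ> ?T2 \<circ> ?T1)"
      by (intro good_comp g1 g2 g3 g4 g5)
    then obtain g where g: "g \<in> NN_LReLU d" "\<And>x i. x\<in>bx d R \<Longrightarrow> i < d \<Longrightarrow>
        \<bar>(?T5 \<circ> ?T4 \<circ> ?T3 \<circ> ?T2 \<circ> ?T1) x i - g x i\<bar> \<le> \<epsilon>"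
      using apprE[OF _ e, where R=R] unfolding good_def by blast
    have eq: "(?T5 \<circ> ?T4 \<circ> ?T3 \<circ> ?T2 \<circ> ?T1) x = upd d F x" if x: "x \<in> bx d R" for x
    proof -
      have "\<bar>x (d-1)\<bar> \<le> R" using x d by (simp add: bx_def)
      then have y1: "x (d - Suc 0) + c \<ge> 1" by (simp add: c_def abs_le_iff)
      then have y0: "x (d - Suc 0) + c > 0" by simp
      have p: "psiL (x (d - Suc 0) + c) = ln (x (d - Suc 0) + c)" using y1 by (simp add: psiL_def)
      have ex: "exp (ln (x (d - Suc 0) + c) + s (proj d x)) = (x (d - Suc 0) + c) * exp (s (proj d x))"
        using y0 by (simp add: exp_add)
      show ?thesis
        by (simp add: addG_def upd_def proj_upd' p ex F_def; simp add: algebra_simps)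
    qed
    show "\<exists>g\<in>NN_LReLU d. \<forall>x\<in>bx d R. \<forall>i<d. \<bar>upd d F x i - g x i\<bar> \<le> \<epsilon>"
    proof (intro bexI[OF _ g(1)] ballI allI impI)
      fix x i assume x: "x \<in> bx d R" and i: "i < d"
      show "\<bar>upd d F x i - g x i\<bar> \<le> \<epsilon>" using g(2)[OF x i] eq[OF x] by simp
    qed
  qed
  then show ?thesis unfolding acf using good_upd[OF d1 bF uF] by simp
qed

lemma inn_good: assumes d: "2 \<le> d" shows "inn (ACF d) d f \<Longrightarrow> good d f"
proof (induction rule: inn.induct)
  case (base W1 g W2)
  have "good d W1" "good d W2" using base by (auto simp: inv_aff_def aff_good)
  moreover have "good d g" using base d by (auto simp: ACF_def intro: acf_good)
  ultimately show ?case by (intro good_comp)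
next
  case (step W g f)
  have "good d W" using step by (auto simp: inv_aff_def aff_good)
  moreover have "good d g" using step d by (auto simp: ACF_def intro: acf_good)
  ultimately show ?case using step.IH by (intro good_comp)
qed

lemma compact_in_box: assumes "compact K" "K \<subseteq> Rvec d" shows "\<exists>R. K \<subseteq> bx d R"
proof -
  have "\<exists>B. \<forall>i\<in>{..<d}. \<forall>x\<in>K. \<bar>x i\<bar> \<le> B"
  proof (rule fin_bnd)
    fix i
    have "compact ((\<lambda>x. x i) ` K)"
      by (rule compact_continuous_image[OF continuous_on_subset[OF continuous_on_product_coordinates] assms(1)]) simp
    then have "bounded ((\<lambda>x. x i) ` K)" by (rule compact_imp_bounded)
    then obtain C where "\<And>u. u \<in> (\<lambda>x. x i) ` K \<Longrightarrow> norm u \<le> C" unfolding bounded_iff by blast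
    then show "\<exists>B. \<forall>x\<in>K. \<bar>x i\<bar> \<le> B" by auto
  qed simp
  then obtain B where "\<forall>i\<in>{..<d}. \<forall>x\<in>K. \<bar>x i\<bar> \<le> B" by blast
  then have "K \<subseteq> bx d B" using assms(2) by (auto simp: bx_def)
  then show ?thesis by blast
qed

theorem mainTheorem7:
  fixes d :: nat and f :: "(nat \<Rightarrow> real) \<Rightarrow> (nat \<Rightarrow> real)"
    and K :: "(nat \<Rightarrow> real) set" and \<epsilon> :: real
  assumes "2 \<le> d"
    and "f \<in> INN (ACF d) d"
    and "compact K" and "K \<subseteq> Rvec d"
    and "\<epsilon> > 0"
  shows "\<exists>g \<in> NN_LReLU d. \<exists>\<delta> < \<epsilon>. \<forall>x \<in> K. linf d (f x - g x) \<le> \<delta>"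
proof -
  have gf: "good d f" using inn_good[OF assms(1)] assms(2) by (simp add: INN_def)
  obtain R where KR: "K \<subseteq> bx d R" using compact_in_box[OF assms(3,4)] by blast
  have e2: "\<epsilon>/2 > 0" using assms(5) by simp
  obtain g where g: "g \<in> NN_LReLU d" "\<And>x i. x\<in>bx d R \<Longrightarrow> i < d \<Longrightarrow> \<bar>f x i - g x i\<bar> \<le> \<epsilon>/2"
    using apprE[OF _ e2, where R=R] gf unfolding good_def by blast
  have "linf d (f x - g x) \<le> \<epsilon>/2" if x: "x \<in> K" for x
  proof -
    have "d \<noteq> 0" using assms(1) by simp
    then show ?thesis unfolding linf_def using g(2) KR x by (subst Max_le_iff) auto
  qed
  moreover have "\<epsilon>/2 < \<epsilon>" using assms(5) by simp
  ultimately show ?thesis using g(1) by blast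
qed


end
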